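(* For every integer $k\ge 2$ and every $n\ge 0$, the cube polynomial $C_{\Pi_{n,k}}(x)$ has degree $n$ and $$C_{\Pi_{n,k}}(x)=\sum_{i=0}^{\lfloor n/2\rfloor}\binom{n-i}{i}\bigl(k+(k-1)x\bigr)^{n-2i}(1+x)^{i}.$$
   Context: For an integer $k\ge 2$, a $k$-Pell string is a finite word over the alphabet $\{0,1,\ldots,k-1,kk\}$, i.e. a word over $\{0,1,\ldots,k\}$ in which every maximal run of the letter $k$ has even length. For $n\ge 0$, the $k$-Pell graph $\Pi_{n,k}$ has as vertices all $k$-Pell strings of length $n$, and two vertices are adjacent if one is obtained from the other either by replacing a single letter $i$ by $i+1$ (or vice versa) for some $i\in\{0,1,\ldots,k-2\}$, or by replacing one factor $(k-1)(k-1)$ by $kk$ (or vice versa), in such a way that the resulting string is again a $k$-Pell string. The cube polynomial of a graph $G$ is $C_G(x)=\sum_{i\ge 0}c_i(G)x^i$, where $c_i(G)$ is the number of induced subgraphs of $G$ isomorphic to the hypercube $Q_i$. *)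

theory Defs
  imports Main "HOL-Computational_Algebra.Polynomial"
begin

text \<open>k-Pell strings: words over the alphabet {0,...,k-1, kk}, written as lists of naturals.\<close>
inductive pell_string :: "nat \<Rightarrow> nat list \<Rightarrow> bool" for k where
  pell_nil: "pell_string k []"
| pell_digit: "a < k \<Longrightarrow> pell_string k w \<Longrightarrow> pell_string k (a # w)"
| pell_kk: "pell_string k w \<Longrightarrow> pell_string k (k # k # w)"

definition pell_vertices :: "nat \<Rightarrow> nat \<Rightarrow> nat list set" where
  "pell_vertices n k = {w. length w = n \<and> pell_string k w}"

definition pell_move :: "nat \<Rightarrow> nat list \<Rightarrow> nat list \<Rightarrow> bool" where
  "pell_move k u v \<longleftrightarrow> length u = length v \<and>
     ((\<exists>j < length u. \<exists>i. i + 2 \<le> k \<and> u ! j = i \<and> v ! j = i + 1 \<and>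
         (\<forall>l < length u. l \<noteq> j \<longrightarrow> u ! l = v ! l))
    \<or> (\<exists>j. j + 1 < length u \<and> u ! j = k - 1 \<and> u ! (j+1) = k - 1 \<and>
         v ! j = k \<and> v ! (j+1) = k \<and>
         (\<forall>l < length u. l \<noteq> j \<longrightarrow> l \<noteq> j + 1 \<longrightarrow> u ! l = v ! l)))"

definition pell_adj :: "nat \<Rightarrow> nat \<Rightarrow> nat list \<Rightarrow> nat list \<Rightarrow> bool" where
  "pell_adj n k u v \<longleftrightarrow> u \<in> pell_vertices n k \<and> v \<in> pell_vertices n k \<and>
     (pell_move k u v \<or> pell_move k v u)"

definition cube_vertices :: "nat \<Rightarrow> bool list set" where
  "cube_vertices i = {w. length w = i}"

definition cube_adj :: "bool list \<Rightarrow> bool list \<Rightarrow> bool" where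
  "cube_adj u v \<longleftrightarrow> length u = length v \<and> card {j. j < length u \<and> u ! j \<noteq> v ! j} = 1"

definition num_induced_cubes :: "'a set \<Rightarrow> ('a \<Rightarrow> 'a \<Rightarrow> bool) \<Rightarrow> nat \<Rightarrow> nat" where
  "num_induced_cubes V E i = card {S. S \<subseteq> V \<and>
     (\<exists>f. bij_betw f (cube_vertices i) S \<and>
        (\<forall>u\<in>cube_vertices i. \<forall>v\<in>cube_vertices i. cube_adj u v \<longleftrightarrow> E (f u) (f v)))}"

text \<open>Cube polynomial of a finite graph; c_i = 0 whenever i > card V, so the sum is complete.\<close>
definition cube_poly :: "'a set \<Rightarrow> ('a \<Rightarrow> 'a \<Rightarrow> bool) \<Rightarrow> int poly" where
  "cube_poly V E = (\<Sum>i\<le>card V. monom (int (num_induced_cubes V E i)) i)"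

end

theory Submission
  imports Defs
begin

lemma pm_Nil1[simp]: "\<not> pell_move k [] v"
  by (simp add: pell_move_def)
lemma pm_Nil2[simp]: "\<not> pell_move k u []"
  by (auto simp add: pell_move_def)

lemma pm_Cons:
  assumes k: "k \<ge> 2"
  shows "pell_move k (a#u) (b#v) \<longleftrightarrow>
     (a = b \<and> pell_move k u v) \<or> (b = Suc a \<and> a + 2 \<le> k \<and> u = v) \<or>
     (a = k-1 \<and> b = k \<and> (\<exists>r. u = (k-1)#r \<and> v = k#r))"
proof
  assume H: "pell_move k (a#u) (b#v)"
  then have len: "length u = length v" by (simp add: pell_move_def)
  from H consider
    (L) j i where "j < Suc (length u)" "i + 2 \<le> k" "(a#u)!j = i" "(b#v)!j = i+1"
       "\<forall>l<Suc (length u). l \<noteq> j \<longrightarrow> (a#u)!l = (b#v)!l"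
  | (K) j where "j+1 < Suc (length u)" "(a#u)!j = k-1" "(a#u)!(j+1) = k-1"
       "(b#v)!j = k" "(b#v)!(j+1) = k"
       "\<forall>l<Suc (length u). l \<noteq> j \<longrightarrow> l \<noteq> j+1 \<longrightarrow> (a#u)!l = (b#v)!l"
    unfolding pell_move_def by auto
  then show "(a = b \<and> pell_move k u v) \<or> (b = Suc a \<and> a + 2 \<le> k \<and> u = v) \<or>
     (a = k-1 \<and> b = k \<and> (\<exists>r. u = (k-1)#r \<and> v = k#r))"
  proof cases
    case L
    show ?thesis
    proof (cases j)
      case 0
      have "u = v"
      proof (rule nth_equalityI)
        show "length u = length v" by fact
        fix l assume "l < length u"
        then show "u!l = v!l" using L(5)[rule_format, of "Suc l"] 0 by simp
      qed
      then show ?thesis using L 0 by simp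
    next
      case (Suc j')
      have ab: "a = b" using L(5)[rule_format, of 0] Suc by simp
      have "pell_move k u v"
        unfolding pell_move_def
      proof (intro conjI disjI1)
        show "length u = length v" by fact
        show "\<exists>j<length u. \<exists>i. i + 2 \<le> k \<and> u ! j = i \<and> v ! j = i + 1 \<and> (\<forall>l<length u. l \<noteq> j \<longrightarrow> u ! l = v ! l)"
        proof (rule exI[of _ j'], intro conjI exI[of _ i] allI impI)
          fix l assume "l < length u" "l \<noteq> j'"
          then show "u!l = v!l" using L(5)[rule_format, of "Suc l"] Suc by simp
        qed (use L Suc in auto)
      qed
      then show ?thesis using ab by simp
    qed
  next
    case K
    show ?thesis
    proof (cases j)
      case 0
      obtain c r where u: "u = c # r" using K 0 by (cases u) auto
      obtain d s where v: "v = d # s" using K 0 len u by (cases v) auto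
      have "r = s"
      proof (rule nth_equalityI)
        show "length r = length s" using len u v by simp
        fix l assume "l < length r"
        then show "r!l = s!l" using K(6)[rule_format, of "Suc (Suc l)"] 0 u v by simp
      qed
      then show ?thesis using K 0 u v by simp
    next
      case (Suc j')
      have ab: "a = b" using K(6)[rule_format, of 0] Suc by simp
      have "pell_move k u v"
        unfolding pell_move_def
      proof (intro conjI disjI2)
        show "length u = length v" by fact
        show "\<exists>j. j + 1 < length u \<and> u ! j = k - 1 \<and> u ! (j + 1) = k - 1 \<and> v ! j = k \<and> v ! (j + 1) = k \<and>
         (\<forall>l<length u. l \<noteq> j \<longrightarrow> l \<noteq> j + 1 \<longrightarrow> u ! l = v ! l)"
        proof (intro exI[of _ j'] conjI allI impI)
          fix l assume "l < length u" "l \<noteq> j'" "l \<noteq> j'+1"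
          then show "u!l = v!l" using K(6)[rule_format, of "Suc l"] Suc by simp
        qed (use K Suc in auto)
      qed
      then show ?thesis using ab by simp
    qed
  qed
next
  assume "(a = b \<and> pell_move k u v) \<or> (b = Suc a \<and> a + 2 \<le> k \<and> u = v) \<or>
     (a = k-1 \<and> b = k \<and> (\<exists>r. u = (k-1)#r \<and> v = k#r))"
  then consider (E) "a = b" "pell_move k u v" | (L) "b = Suc a" "a + 2 \<le> k" "u = v"
    | (K) r where "a = k-1" "b = k" "u = (k-1)#r" "v = k#r" by blast
  then show "pell_move k (a#u) (b#v)"
  proof cases
    case E
    then have len: "length u = length v" by (simp add: pell_move_def)
    from E(2) consider
      (L) j i where "j < length u" "i + 2 \<le> k" "u!j = i" "v!j = i+1"
         "\<forall>l<length u. l \<noteq> j \<longrightarrow> u!l = v!l"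
    | (K) j where "j+1 < length u" "u!j = k-1" "u!(j+1) = k-1"
         "v!j = k" "v!(j+1) = k"
         "\<forall>l<length u. l \<noteq> j \<longrightarrow> l \<noteq> j+1 \<longrightarrow> u!l = v!l"
      unfolding pell_move_def by auto
    then show ?thesis
    proof cases
      case L
      show ?thesis unfolding pell_move_def
      proof (intro conjI disjI1)
        show "length (a#u) = length (b#v)" using len by simp
        show "\<exists>j<length (a#u). \<exists>i. i + 2 \<le> k \<and> (a#u) ! j = i \<and> (b#v) ! j = i + 1 \<and> (\<forall>l<length (a#u). l \<noteq> j \<longrightarrow> (a#u) ! l = (b#v) ! l)"
        proof (rule exI[of _ "Suc j"], intro conjI exI[of _ i] allI impI)
          fix l assume "l < length (a#u)" "l \<noteq> Suc j"
          then show "(a#u)!l = (b#v)!l" using L(5) E(1) by (cases l) auto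
        qed (use L in auto)
      qed
    next
      case K
      show ?thesis unfolding pell_move_def
      proof (intro conjI disjI2)
        show "length (a#u) = length (b#v)" using len by simp
        show "\<exists>j. j + 1 < length (a#u) \<and> (a#u) ! j = k - 1 \<and> (a#u) ! (j + 1) = k - 1 \<and> (b#v) ! j = k \<and> (b#v) ! (j + 1) = k \<and>
         (\<forall>l<length (a#u). l \<noteq> j \<longrightarrow> l \<noteq> j + 1 \<longrightarrow> (a#u) ! l = (b#v) ! l)"
        proof (intro exI[of _ "Suc j"] conjI allI impI)
          fix l assume "l < length (a#u)" "l \<noteq> Suc j" "l \<noteq> Suc j + 1"
          then show "(a#u)!l = (b#v)!l" using K(6) E(1) by (cases l) auto
        qed (use K in auto)
      qed
    qed
  next
    case L
    show ?thesis unfolding pell_move_def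
    proof (intro conjI disjI1)
      show "length (a#u) = length (b#v)" using L by simp
      show "\<exists>j<length (a#u). \<exists>i. i + 2 \<le> k \<and> (a#u) ! j = i \<and> (b#v) ! j = i + 1 \<and> (\<forall>l<length (a#u). l \<noteq> j \<longrightarrow> (a#u) ! l = (b#v) ! l)"
      proof (rule exI[of _ 0], intro conjI exI[of _ a] allI impI)
        fix l assume "l < length (a#u)" "l \<noteq> 0"
        then show "(a#u)!l = (b#v)!l" using L by (cases l) auto
      qed (use L in auto)
    qed
  next
    case K
    show ?thesis unfolding pell_move_def
    proof (intro conjI disjI2)
      show "length (a#u) = length (b#v)" using K by simp
      show "\<exists>j. j + 1 < length (a#u) \<and> (a#u) ! j = k - 1 \<and> (a#u) ! (j + 1) = k - 1 \<and> (b#v) ! j = k \<and> (b#v) ! (j + 1) = k \<and>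
         (\<forall>l<length (a#u). l \<noteq> j \<longrightarrow> l \<noteq> j + 1 \<longrightarrow> (a#u) ! l = (b#v) ! l)"
      proof (intro exI[of _ 0] conjI allI impI)
        fix l assume "l < length (a#u)" "l \<noteq> 0" "l \<noteq> 0 + 1"
        then obtain l' where "l = Suc (Suc l')" by (metis One_nat_def add_0 not0_implies_Suc)
        then show "(a#u)!l = (b#v)!l" using K by simp
      qed (use K in auto)
    qed
  qed
qed

fun gadj :: "nat list \<Rightarrow> nat list \<Rightarrow> bool" where
  "gadj (a#x) (b#y) = ((a = b \<and> gadj x y) \<or> ((a = Suc b \<or> b = Suc a) \<and> x = y))"
| "gadj _ _ = False"

fun psi :: "nat \<Rightarrow> nat list \<Rightarrow> nat list" where
  "psi k [] = []"
| "psi k [a] = [a]"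
| "psi k (a#b#w) = (if a = k then k # (k-1) # psi k w else a # psi k (b#w))"

inductive psl :: "nat \<Rightarrow> nat list \<Rightarrow> bool" for k where
  psl_nil: "psl k []"
| psl_d: "a < k \<Longrightarrow> psl k z \<Longrightarrow> psl k (a#z)"
| psl_kk: "psl k z \<Longrightarrow> psl k (k#(k-1)#z)"

lemma psi_lt[simp]: "a < k \<Longrightarrow> psi k (a#w) = a # psi k w"
  by (cases w) auto

lemma psi_kk[simp]: "psi k (k#k#w) = k # (k-1) # psi k w"
  by simp

lemma psi_len: "pell_string k w \<Longrightarrow> length (psi k w) = length w"
  by (induction rule: pell_string.induct) auto

lemma psi_psl: "pell_string k w \<Longrightarrow> psl k (psi k w)"
proof (induction rule: pell_string.induct)
  case (pell_kk w)
  then show ?case using psl_kk[of k "psi k w"] by simp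
qed (auto intro: psl.intros)

lemma psl_psi: "psl k z \<Longrightarrow> \<exists>w. pell_string k w \<and> psi k w = z"
proof (induction rule: psl.induct)
  case psl_nil then show ?case by (auto intro: pell_string.intros)
next
  case (psl_d a z)
  then obtain w where "pell_string k w" "psi k w = z" by blast
  then show ?case using psl_d by (intro exI[of _ "a#w"]) (auto intro: pell_string.intros)
next
  case (psl_kk z)
  then obtain w where "pell_string k w" "psi k w = z" by blast
  then show ?case by (intro exI[of _ "k#k#w"]) (auto intro: pell_string.intros)
qed

lemma psi_inj:
  assumes k: "k \<ge> 1"
  shows "pell_string k u \<Longrightarrow> pell_string k v \<Longrightarrow> psi k u = psi k v \<Longrightarrow> u = v"
proof (induction arbitrary: v rule: pell_string.induct)
  case pell_nil
  then show ?case by (cases rule: pell_string.cases) auto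
next
  case (pell_digit a w)
  from pell_digit.prems show ?case
  proof (cases rule: pell_string.cases)
    case pell_nil then show ?thesis using pell_digit by simp
  next
    case (pell_digit b w')
    then show ?thesis using pell_digit.IH pell_digit.prems pell_digit.hyps by auto
  next
    case (pell_kk w')
    then show ?thesis using pell_digit.prems pell_digit.hyps by auto
  qed
next
  case (pell_kk w)
  from pell_kk.prems show ?case
  proof (cases rule: pell_string.cases)
    case pell_nil then show ?thesis using pell_kk by simp
  next
    case (pell_digit b w')
    then show ?thesis using pell_kk.prems by auto
  next
    case (pell_kk w')
    then show ?thesis using pell_kk.IH pell_kk.prems by auto
  qed
qed

lemma psi_km1:
  assumes k: "k \<ge> 2" and u: "pell_string k u" and v: "pell_string k v"
  shows "psi k u = (k-1) # psi k v \<longleftrightarrow> u = (k-1) # v"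
proof
  assume H: "psi k u = (k-1) # psi k v"
  have pv: "pell_string k ((k-1)#v)" using v k by (auto intro: pell_string.intros)
  have "psi k ((k-1)#v) = (k-1) # psi k v" using k by simp
  then show "u = (k-1) # v" using psi_inj[OF _ u pv] H k by simp
next
  assume "u = (k-1) # v" then show "psi k u = (k-1) # psi k v" using k by simp
qed

lemma gadj_Nil1[simp]: "\<not> gadj [] y" by (cases y) auto
lemma gadj_Nil2[simp]: "\<not> gadj x []" by (cases x) auto

lemma adj_psi:
  assumes k: "k \<ge> 2"
  shows "pell_string k u \<Longrightarrow> pell_string k v \<Longrightarrow>
     (pell_move k u v \<or> pell_move k v u) \<longleftrightarrow> gadj (psi k u) (psi k v)"
proof (induction arbitrary: v rule: pell_string.induct)
  case pell_nil
  then show ?case by simp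
next
  case (pell_digit a w)
  from pell_digit.prems show ?case
  proof (cases rule: pell_string.cases)
    case pell_nil then show ?thesis using pell_digit by simp
  next
    case (pell_digit b w')
    have inj: "psi k w = psi k w' \<longleftrightarrow> w = w'"
      using psi_inj[of k w w'] pell_digit.hyps `pell_string k w'` k by auto
    have IH: "(pell_move k w w' \<or> pell_move k w' w) \<longleftrightarrow> gadj (psi k w) (psi k w')"
      using pell_digit.IH `pell_string k w'` by blast
    have m1: "pell_move k (a#w) (b#w') \<longleftrightarrow> (a=b \<and> pell_move k w w') \<or> (b = Suc a \<and> w=w')"
      using pm_Cons[OF k, of a w b w'] `b<k` by auto
    have m2: "pell_move k (b#w') (a#w) \<longleftrightarrow> (a=b \<and> pell_move k w' w) \<or> (a = Suc b \<and> w=w')"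
      using pm_Cons[OF k, of b w' a w] `a<k` by auto
    have g: "gadj (psi k (a#w)) (psi k (b#w')) \<longleftrightarrow> (a = b \<and> gadj (psi k w) (psi k w')) \<or> ((a = Suc b \<or> b = Suc a) \<and> psi k w = psi k w')"
      using `a<k` `b<k` by simp
    show ?thesis unfolding pell_digit(1) m1 m2 g inj using IH by blast
  next
    case (pell_kk w')
    have e: "psi k w = (k-1) # psi k w' \<longleftrightarrow> w = (k-1) # w'"
      using psi_km1[OF k pell_digit.hyps(2) `pell_string k w'`] .
    have m1: "pell_move k (a#w) (k#k#w') \<longleftrightarrow> w = (k-1)#w' \<and> a = k-1"
      using pm_Cons[OF k, of a w k "k#w'"] `a<k` by auto
    have m2: "\<not> pell_move k (k#k#w') (a#w)"
      using pm_Cons[OF k, of k "k#w'" a w] `a<k` k by auto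
    have g: "gadj (psi k (a#w)) (psi k (k#k#w')) \<longleftrightarrow> a = k-1 \<and> psi k w = (k-1) # psi k w'"
      using `a<k` k by auto
    show ?thesis unfolding pell_kk(1) m1 g e using m2 by blast
  qed
next
  case (pell_kk w)
  from pell_kk.prems show ?case
  proof (cases rule: pell_string.cases)
    case pell_nil then show ?thesis using pell_kk by simp
  next
    case (pell_digit b w')
    have e: "psi k w' = (k-1) # psi k w \<longleftrightarrow> w' = (k-1) # w"
      using psi_km1[OF k `pell_string k w'` pell_kk.hyps] .
    have m1: "pell_move k (b#w') (k#k#w) \<longleftrightarrow> w' = (k-1)#w \<and> b = k-1"
      using pm_Cons[OF k, of b w' k "k#w"] `b<k` by auto
    have m2: "\<not> pell_move k (k#k#w) (b#w')"
      using pm_Cons[OF k, of k "k#w" b w'] `b<k` k by auto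
    have g: "gadj (psi k (k#k#w)) (psi k (b#w')) \<longleftrightarrow> b = k-1 \<and> psi k w' = (k-1) # psi k w"
      using `b<k` k by auto
    show ?thesis unfolding pell_digit(1) m1 g e using m2 by blast
  next
    case (pell_kk w')
    have IH: "(pell_move k w w' \<or> pell_move k w' w) \<longleftrightarrow> gadj (psi k w) (psi k w')"
      using pell_kk.IH `pell_string k w'` by blast
    have m1: "pell_move k (k#k#w) (k#k#w') \<longleftrightarrow> pell_move k w w'"
      using pm_Cons[OF k, of k "k#w" k "k#w'"] pm_Cons[OF k, of k w k w'] k by auto
    have m2: "pell_move k (k#k#w') (k#k#w) \<longleftrightarrow> pell_move k w' w"
      using pm_Cons[OF k, of k "k#w'" k "k#w"] pm_Cons[OF k, of k w' k w] k by auto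
    have g: "gadj (psi k (k#k#w)) (psi k (k#k#w')) \<longleftrightarrow> gadj (psi k w) (psi k w')"
      by simp
    show ?thesis unfolding pell_kk(1) m1 m2 g IH by blast
  qed
qed

fun comb :: "nat list \<Rightarrow> nat list \<Rightarrow> nat list \<Rightarrow> nat list" where
  "comb (a#u) (b#v) (c#w) = (if b \<noteq> a then b else c) # comb u v w"
| "comb _ _ _ = []"

fun disj :: "nat list \<Rightarrow> nat list \<Rightarrow> nat list \<Rightarrow> bool" where
  "disj (a#u) (b#v) (c#w) = ((b = a \<or> c = a) \<and> disj u v w)"
| "disj _ _ _ = True"

lemma gadj_len: "gadj x y \<Longrightarrow> length x = length y"
  by (induction x y rule: gadj.induct) auto

lemma gadj_irrefl[simp]: "\<not> gadj x x"
  by (induction x) auto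

lemma gadj_sym: "gadj x y \<Longrightarrow> gadj y x"
  by (induction x y rule: gadj.induct) auto

lemma comb_same1': "length v = length u \<Longrightarrow> comb u u v = v"
proof (induction u arbitrary: v)
  case Nil then show ?case by simp
next
  case (Cons a u) then show ?case by (cases v) auto
qed

lemma comb_same2: "length v = length u \<Longrightarrow> comb u v u = v"
proof (induction u arbitrary: v)
  case Nil then show ?case by simp
next
  case (Cons a u) then show ?case by (cases v) auto
qed

lemma disj_same1: "disj u u v"
proof (induction u arbitrary: v)
  case Nil then show ?case by simp
next
  case (Cons a u) then show ?case by (cases v) auto
qed

lemma disj_same2: "disj u v u"
proof (induction u arbitrary: v)
  case Nil then show ?case by simp
next
  case (Cons a u) then show ?case by (cases v) auto
qed

lemma square:
  "gadj u v1 \<Longrightarrow> gadj u v2 \<Longrightarrow> gadj v1 w \<Longrightarrow> gadj v2 w \<Longrightarrow> v1 \<noteq> v2 \<Longrightarrow> u \<noteq> w \<Longrightarrow>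
    disj u v1 v2 \<and> w = comb u v1 v2"
proof (induction u arbitrary: v1 v2 w)
  case Nil then show ?case by simp
next
  case (Cons a u)
  obtain b x1 where v1: "v1 = b # x1" using Cons.prems(1) by (cases v1) auto
  obtain c x2 where v2: "v2 = c # x2" using Cons.prems(2) by (cases v2) auto
  obtain d y where w: "w = d # y" using Cons.prems(3) v1 by (cases w) auto
  have l1: "length x1 = length u" "length x2 = length u" "length y = length u"
    using gadj_len[OF Cons.prems(1)] gadj_len[OF Cons.prems(2)] gadj_len[OF Cons.prems(3)] v1 v2 w by auto
  note P = Cons.prems[unfolded v1 v2 w, simplified]
  show ?case unfolding v1 v2 w
    using P Cons.IH[of x1 x2 y] l1 comb_same1' comb_same2 disj_same1 disj_same2 gadj_sym
    by auto
qed

lemma comb_nth: "length v1 = length u \<Longrightarrow> length v2 = length u \<Longrightarrow>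
   comb u v1 v2 = map (\<lambda>p. if v1!p \<noteq> u!p then v1!p else v2!p) [0..<length u]"
proof (induction u arbitrary: v1 v2)
  case Nil then show ?case by simp
next
  case (Cons a u)
  then obtain b x1 c x2 where "v1 = b#x1" "v2 = c#x2" by (cases v1; cases v2) auto
  with Cons show ?case by (simp add: map_upt_Suc del: upt_Suc)
qed

lemma disj_nth: "disj u v1 v2 \<Longrightarrow> length v1 = length u \<Longrightarrow> length v2 = length u \<Longrightarrow> p < length u \<Longrightarrow>
   v1!p = u!p \<or> v2!p = u!p"
proof (induction u arbitrary: v1 v2 p)
  case Nil then show ?case by simp
next
  case (Cons a u)
  then obtain b x1 c x2 where "v1 = b#x1" "v2 = c#x2" by (cases v1; cases v2) auto
  with Cons show ?case by (cases p) auto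
qed

lemma gadj_upd: "gadj u v \<Longrightarrow> \<exists>p g. p < length u \<and> v = u[p := g] \<and> (u!p = Suc g \<or> g = Suc (u!p))"
proof (induction u v rule: gadj.induct)
  case (1 a x b y)
  show ?case
  proof (cases "a = b \<and> gadj x y")
    case True
    then obtain p g where "p < length x" "y = x[p := g]" "x!p = Suc g \<or> g = Suc (x!p)" using 1 by blast
    then show ?thesis using True by (intro exI[of _ "Suc p"] exI[of _ g]) auto
  next
    case False
    then have "(a = Suc b \<or> b = Suc a) \<and> x = y" using 1 by auto
    then show ?thesis by (intro exI[of _ 0] exI[of _ b]) auto
  qed
qed auto

definition Mx :: "nat list \<Rightarrow> (nat \<Rightarrow> nat) \<Rightarrow> (nat \<Rightarrow> nat) \<Rightarrow> nat set \<Rightarrow> nat list" where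
  "Mx b pp g T = map (\<lambda>p. if \<exists>i\<in>T. pp i = p then g (THE i. i\<in>T \<and> pp i = p) else b!p) [0..<length b]"

lemma Mx_len[simp]: "length (Mx b pp g T) = length b"
  by (simp add: Mx_def)

lemma Mx_empty: "Mx b pp g {} = b"
  by (rule nth_equalityI) (auto simp: Mx_def)

lemma Mx_in: "inj_on pp T \<Longrightarrow> i \<in> T \<Longrightarrow> pp i < length b \<Longrightarrow> Mx b pp g T ! (pp i) = g i"
proof -
  assume a: "inj_on pp T" "i \<in> T" "pp i < length b"
  have "(THE j. j\<in>T \<and> pp j = pp i) = i"
    using a by (intro the_equality) (auto dest: inj_onD)
  then show ?thesis using a by (auto simp: Mx_def)
qed

lemma Mx_out: "p < length b \<Longrightarrow> p \<notin> pp ` T \<Longrightarrow> Mx b pp g T ! p = b ! p"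
  by (auto simp: Mx_def)

lemma Mx_insert:
  assumes "inj_on pp (insert i T)" "i \<notin> T" "pp i < length b" "\<forall>j\<in>T. pp j < length b"
  shows "Mx b pp g (insert i T) = (Mx b pp g T)[pp i := g i]"
proof (rule nth_equalityI)
  show "length (Mx b pp g (insert i T)) = length ((Mx b pp g T)[pp i := g i])" by simp
  fix p assume p: "p < length (Mx b pp g (insert i T))"
  show "Mx b pp g (insert i T) ! p = (Mx b pp g T)[pp i := g i] ! p"
  proof (cases "p = pp i")
    case True then show ?thesis using assms Mx_in[of pp "insert i T" i b g] by simp
  next
    case False
    show ?thesis
    proof (cases "p \<in> pp ` T")
      case True
      then obtain j where j: "j \<in> T" "p = pp j" by auto
      have i1: "inj_on pp T" using assms(1) by (auto simp: inj_on_def)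
      show ?thesis using Mx_in[OF assms(1), of j b g] Mx_in[OF i1 j(1), of b g] j False assms by simp
    next
      case False
      then show ?thesis using `p \<noteq> pp i` p Mx_out[of p b pp "insert i T"] Mx_out[of p b pp T] by simp
    qed
  qed
qed

lemma cube_adj_upd: "i < length x \<Longrightarrow> cube_adj x (x[i := \<not> x!i])"
proof -
  assume i: "i < length x"
  have "{j. j < length x \<and> x!j \<noteq> x[i := \<not> x!i]!j} = {i}"
    using i by (auto simp: nth_list_update)
  then show ?thesis by (simp add: cube_adj_def)
qed

lemma cube_adj_sym: "cube_adj x y \<Longrightarrow> cube_adj y x"
proof -
  assume a: "cube_adj x y"
  have "{j. j < length y \<and> y ! j \<noteq> x ! j} = {j. j < length x \<and> x ! j \<noteq> y ! j}"
    using a by (auto simp: cube_adj_def)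
  moreover have "length y = length x" using a by (simp add: cube_adj_def)
  ultimately show ?thesis using a unfolding cube_adj_def by metis
qed

definition Tset :: "bool list \<Rightarrow> nat set" where
  "Tset x = {i. i < length x \<and> x!i}"

lemma Tset_upd: "i < length x \<Longrightarrow> Tset (x[i := False]) = Tset x - {i}"
  by (auto simp: Tset_def nth_list_update)

lemma Tset_fin: "finite (Tset x)"
  by (simp add: Tset_def)

lemma Tset_sub: "Tset x \<subseteq> {..<length x}"
  by (auto simp: Tset_def)

lemma cv_iff: "x \<in> cube_vertices d \<longleftrightarrow> length x = d"
  by (simp add: cube_vertices_def)

lemma grid_prod:
  fixes f :: "bool list \<Rightarrow> nat list"
  assumes bij: "bij_betw f (cube_vertices d) S"
    and adj: "\<And>x y. x \<in> cube_vertices d \<Longrightarrow> y \<in> cube_vertices d \<Longrightarrow> cube_adj x y \<longleftrightarrow> gadj (f x) (f y)"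
  shows "\<exists>b pp g. inj_on pp {..<d} \<and> (\<forall>i<d. pp i < length b \<and> (b!(pp i) = Suc (g i) \<or> g i = Suc (b!(pp i))))
      \<and> S = Mx b pp g ` Pow {..<d}"
proof -
  define z0 where "z0 = replicate d False"
  define ee where "ee i = z0[i := True]" for i
  define b where "b = f z0"
  have inj: "inj_on f (cube_vertices d)" using bij by (simp add: bij_betw_def)
  have z0cv: "z0 \<in> cube_vertices d" by (simp add: z0_def cv_iff)
  have eecv: "ee i \<in> cube_vertices d" for i by (simp add: ee_def z0_def cv_iff)
  have adj1: "gadj (f x) (f y)" if "cube_adj x y" "x \<in> cube_vertices d" "y \<in> cube_vertices d" for x y
    using adj that by blast
  have adjb: "gadj b (f (ee i))" if "i < d" for i
  proof -
    have "ee i = z0[i := \<not> z0!i]" using that by (simp add: ee_def z0_def)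
    then have "cube_adj z0 (ee i)" using cube_adj_upd[of i z0] that by (simp add: z0_def)
    then show ?thesis unfolding b_def using adj1 z0cv eecv by blast
  qed
  have ex: "\<forall>i\<in>{..<d}. \<exists>pg. fst pg < length b \<and> f (ee i) = b[fst pg := snd pg] \<and> (b!(fst pg) = Suc (snd pg) \<or> snd pg = Suc (b!(fst pg)))"
  proof
    fix i assume "i \<in> {..<d}"
    then obtain p g where "p < length b" "f (ee i) = b[p := g]" "b!p = Suc g \<or> g = Suc (b!p)"
      using gadj_upd[OF adjb[of i]] by auto
    then show "\<exists>pg. fst pg < length b \<and> f (ee i) = b[fst pg := snd pg] \<and> (b!(fst pg) = Suc (snd pg) \<or> snd pg = Suc (b!(fst pg)))"
      by (intro exI[of _ "(p,g)"]) auto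
  qed
  obtain F where F: "\<forall>i\<in>{..<d}. fst (F i) < length b \<and> f (ee i) = b[fst (F i) := snd (F i)] \<and> (b!(fst (F i)) = Suc (snd (F i)) \<or> snd (F i) = Suc (b!(fst (F i))))"
    using bchoice[OF ex] by blast
  define pp where "pp i = fst (F i)" for i
  define g where "g i = snd (F i)" for i
  have H: "pp i < length b" "f (ee i) = b[pp i := g i]" "b!(pp i) = Suc (g i) \<or> g i = Suc (b!(pp i))"
    if "i < d" for i using F that by (auto simp: pp_def g_def)
  have gne: "g i \<noteq> b!(pp i)" if "i < d" for i using H(3)[OF that] by auto
  have injpp: "inj_on pp {..<d}"
  proof (rule inj_onI, rule ccontr)
    fix i j assume ij: "i \<in> {..<d}" "j \<in> {..<d}" "pp i = pp j" "i \<noteq> j"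
    define e2 where "e2 = (ee i)[j := True]"
    have e2cv: "e2 \<in> cube_vertices d" by (simp add: e2_def ee_def z0_def cv_iff)
    have "e2 = (ee i)[j := \<not> (ee i)!j]" using ij by (simp add: e2_def ee_def z0_def)
    then have a1: "cube_adj (ee i) e2" using cube_adj_upd[of j "ee i"] ij by (simp add: ee_def z0_def)
    have "e2 = (ee j)[i := \<not> (ee j)!i]" using ij
      by (simp add: e2_def ee_def z0_def list_update_swap)
    then have a2: "cube_adj (ee j) e2" using cube_adj_upd[of i "ee j"] ij by (simp add: ee_def z0_def)
    have ne1: "ee i \<noteq> ee j" using ij by (auto simp: ee_def z0_def list_eq_iff_nth_eq)
    have ne2: "z0 \<noteq> e2" using ij by (auto simp: e2_def ee_def z0_def list_eq_iff_nth_eq)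
    have "f (ee i) \<noteq> f (ee j)" using inj ne1 eecv by (meson inj_onD)
    moreover have "b \<noteq> f e2" unfolding b_def using inj ne2 z0cv e2cv by (meson inj_onD)
    ultimately have dj: "disj b (f (ee i)) (f (ee j))"
      using square[OF adjb[of i] adjb[of j] adj1[OF a1 eecv e2cv] adj1[OF a2 eecv e2cv]] ij by auto
    have l1: "length (f (ee i)) = length b" "length (f (ee j)) = length b" using H ij by auto
    have "f (ee i) ! pp i = b ! pp i \<or> f (ee j) ! pp i = b ! pp i"
      by (rule disj_nth[OF dj l1]) (use H ij in auto)
    then show False using H[of i] H[of j] gne[of i] gne[of j] ij by auto
  qed
  let ?M = "Mx b pp g"
  have lenb: "\<forall>l\<in>R. pp l < length b" if "R \<subseteq> {..<d}" for R using that H by auto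
  have main: "\<forall>x. length x = d \<longrightarrow> card (Tset x) = m \<longrightarrow> f x = ?M (Tset x)" for m
  proof (induction m rule: less_induct)
    case (less m)
    show ?case
    proof (intro allI impI)
      fix x :: "bool list" assume lx: "length x = d" and cm: "card (Tset x) = m"
      define T where "T = Tset x"
      have Tsub: "T \<subseteq> {..<d}" using Tset_sub lx T_def by auto
      have Tfin: "finite T" using Tset_fin T_def by auto
      have xcv: "x \<in> cube_vertices d" using lx cv_iff by auto
      consider "m = 0" | "m = 1" | "m \<ge> 2" by linarith
      then show "f x = ?M (Tset x)"
      proof cases
        case 1
        then have "T = {}" using cm Tfin T_def by auto
        then have "x = z0" using lx by (auto simp: T_def Tset_def z0_def list_eq_iff_nth_eq)
        then show ?thesis using `T = {}` T_def by (simp add: Mx_empty b_def)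
      next
        case 2
        then obtain i where Ti: "T = {i}" using cm T_def card_1_singletonE by blast
        have il: "i < d" using Ti Tsub by auto
        have "x = ee i"
        proof (rule nth_equalityI)
          show "length x = length (ee i)" using lx by (simp add: ee_def z0_def)
          fix p assume p: "p < length x"
          then have "x!p \<longleftrightarrow> p \<in> T" by (simp add: T_def Tset_def)
          then show "x!p = ee i ! p" using Ti il lx p by (simp add: ee_def z0_def nth_list_update)
        qed
        then have "f x = b[pp i := g i]" using H il by simp
        also have "\<dots> = ?M {i}" using Mx_insert[of pp i "{}" b g] H il by (simp add: Mx_empty)
        finally show ?thesis using Ti T_def by simp
      next
        case 3
        obtain i where i: "i \<in> T" using cm 3 T_def by fastforce
        have "card (T - {i}) \<ge> 1" using cm 3 i Tfin T_def by simp
        then have "T - {i} \<noteq> {}" by (metis card.empty not_one_le_zero)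
        then obtain j where j: "j \<in> T" "j \<noteq> i" by blast
        have il: "i < d" "j < d" using i j Tsub by auto
        have xi: "x!i" "x!j" using i j by (auto simp: T_def Tset_def)
        define xi where "xi = x[i := False]"
        define xj where "xj = x[j := False]"
        define y where "y = xi[j := False]"
        define R where "R = T - {i, j}"
        have Txi: "Tset xi = T - {i}" using il lx by (simp add: xi_def Tset_upd T_def)
        have Txj: "Tset xj = T - {j}" using il lx by (simp add: xj_def Tset_upd T_def)
        have Ty: "Tset y = R" using il lx by (simp add: y_def xi_def Tset_upd T_def R_def Diff_insert2[symmetric])
        have lxs: "length xi = d" "length xj = d" "length y = d" using lx by (auto simp: xi_def xj_def y_def)
        have cvs: "xi \<in> cube_vertices d" "xj \<in> cube_vertices d" "y \<in> cube_vertices d" using lxs cv_iff by auto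
        have c1: "card (T - {i}) < m" "card (T - {j}) < m" "card R < m"
          using i j Tfin cm T_def 3 unfolding R_def by (auto intro: psubset_card_mono)
        have "T - {i} = insert j R" "T - {j} = insert i R" using i j unfolding R_def by auto
        moreover have "f xi = ?M (Tset xi)" using less.IH[OF c1(1), rule_format, of xi] lxs(1) Txi by simp
        moreover have "f xj = ?M (Tset xj)" using less.IH[OF c1(2), rule_format, of xj] lxs(2) Txj by simp
        ultimately have fxi: "f xi = ?M (insert j R)" and fxj: "f xj = ?M (insert i R)"
          using Txi Txj by auto
        have fy: "f y = ?M R" using less.IH[OF c1(3)] lxs Ty by blast
        have RT: "T = insert i (insert j R)" using i j unfolding R_def by auto
        have Rsub: "R \<subseteq> {..<d}" using Tsub R_def by auto
        have iR: "i \<notin> R" "j \<notin> R" by (auto simp: R_def)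
        have ss: "insert i R \<subseteq> {..<d}" "insert j R \<subseteq> {..<d}" "insert i (insert j R) \<subseteq> {..<d}"
          using Rsub il by auto
        have injs: "inj_on pp (insert i R)" "inj_on pp (insert j R)" "inj_on pp (insert i (insert j R))"
          using inj_on_subset[OF injpp ss(1)] inj_on_subset[OF injpp ss(2)] inj_on_subset[OF injpp ss(3)] by blast+
        have M1: "?M (insert i R) = (?M R)[pp i := g i]"
          using Mx_insert[OF injs(1) iR(1)] H il lenb[OF Rsub] by simp
        have M2: "?M (insert j R) = (?M R)[pp j := g j]"
          using Mx_insert[OF injs(2) iR(2)] H il lenb[OF Rsub] by simp
        have M3: "?M T = ((?M R)[pp j := g j])[pp i := g i]"
          using Mx_insert[OF injs(3)] iR j H il lenb[OF Rsub] M2 RT by simp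
        have e1: "xj = y[i := \<not> y!i]" using il xi lx `j \<noteq> i`
          by (auto simp: xj_def y_def xi_def list_eq_iff_nth_eq nth_list_update)
        have e2: "x = xj[j := \<not> xj!j]" using il xi lx `j \<noteq> i`
          by (auto simp: xj_def list_eq_iff_nth_eq nth_list_update)
        have e3: "xi = y[j := \<not> y!j]" using il xi lx `j \<noteq> i`
          by (auto simp: y_def xi_def list_eq_iff_nth_eq nth_list_update)
        have e4: "x = xi[i := \<not> xi!i]" using il xi lx `j \<noteq> i`
          by (auto simp: xi_def list_eq_iff_nth_eq nth_list_update)
        have a1: "gadj (f y) (f xj)" using adj1 cube_adj_upd[of i y] e1 cvs lxs il by auto
        have a2: "gadj (f y) (f xi)" using adj1 cube_adj_upd[of j y] e3 cvs lxs il by auto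
        have a3: "gadj (f xj) (f x)" using adj1 cube_adj_upd[of j xj] e2 cvs lxs il xcv by auto
        have a4: "gadj (f xi) (f x)" using adj1 cube_adj_upd[of i xi] e4 cvs lxs il xcv by auto
        have "xj ! i \<noteq> xi ! i" using xi il lx `j \<noteq> i` by (simp add: xi_def xj_def nth_list_update)
        then have "xj \<noteq> xi" by auto
        then have n1: "f xj \<noteq> f xi" using inj cvs by (meson inj_onD)
        have "y ! i \<noteq> x ! i" using xi il lx `j \<noteq> i` by (simp add: y_def xi_def nth_list_update)
        then have "y \<noteq> x" by auto
        then have n2: "f y \<noteq> f x" using inj cvs xcv by (meson inj_onD)
        have fx: "f x = comb (f y) (f xj) (f xi)" using square[OF a1 a2 a3 a4 n1 n2] by simp
        have ub: "?M R ! pp i = b ! pp i" using Mx_out[of "pp i" b pp R g] H il injs(1) iR by auto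
        show ?thesis unfolding fx fy fxi fxj M1 M2 T_def[symmetric] M3
        proof (subst comb_nth, simp, simp, rule nth_equalityI)
          fix p assume p: "p < length (map (\<lambda>p. if (?M R)[pp i := g i] ! p \<noteq> ?M R ! p
                  then (?M R)[pp i := g i] ! p else (?M R)[pp j := g j] ! p) [0..<length (?M R)])"
          then show "map (\<lambda>p. if (?M R)[pp i := g i] ! p \<noteq> ?M R ! p
                  then (?M R)[pp i := g i] ! p else (?M R)[pp j := g j] ! p) [0..<length (?M R)] ! p
             = (?M R)[pp j := g j, pp i := g i] ! p"
            using ub gne[OF il(1)] H il by (auto simp: nth_list_update)
        qed simp
      qed
    qed
  qed
  have fM: "f x = ?M (Tset x)" if "x \<in> cube_vertices d" for x using main that cv_iff by blast
  have "Tset ` cube_vertices d = Pow {..<d}"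
  proof
    show "Tset ` cube_vertices d \<subseteq> Pow {..<d}" using Tset_sub cv_iff by fastforce
    show "Pow {..<d} \<subseteq> Tset ` cube_vertices d"
    proof
      fix T assume "T \<in> Pow {..<d}"
      then have "Tset (map (\<lambda>i. i \<in> T) [0..<d]) = T" by (auto simp: Tset_def)
      moreover have "map (\<lambda>i. i \<in> T) [0..<d] \<in> cube_vertices d" by (simp add: cv_iff)
      ultimately show "T \<in> Tset ` cube_vertices d" by (metis image_eqI)
    qed
  qed
  moreover have "S = f ` cube_vertices d" using bij by (simp add: bij_betw_def)
  ultimately have "S = ?M ` Pow {..<d}" using fM by (metis (no_types, lifting) image_cong image_image)
  then show ?thesis using injpp H by blast
qed

definition boxset :: "(nat \<times> nat) list \<Rightarrow> nat list set" where
  "boxset B = {z. length z = length B \<and> (\<forall>p<length B. fst (B!p) \<le> z!p \<and> z!p \<le> snd (B!p))}"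

definition wfb :: "(nat \<times> nat) list \<Rightarrow> bool" where
  "wfb B = (\<forall>q\<in>set B. snd q = fst q \<or> snd q = Suc (fst q))"

definition dimb :: "(nat \<times> nat) list \<Rightarrow> nat" where
  "dimb B = length (filter (\<lambda>q. fst q \<noteq> snd q) B)"

lemma boxset_Nil[simp]: "boxset [] = {[]}"
  by (auto simp: boxset_def)

lemma boxset_Cons: "boxset ((l,u)#B) = {a#z | a z. l \<le> a \<and> a \<le> u \<and> z \<in> boxset B}"
proof (rule set_eqI)
  fix v
  show "v \<in> boxset ((l,u)#B) \<longleftrightarrow> v \<in> {a#z | a z. l \<le> a \<and> a \<le> u \<and> z \<in> boxset B}"
  proof (cases v)
    case Nil then show ?thesis by (auto simp: boxset_def)
  next
    case (Cons a z)
    have "v \<in> boxset ((l,u)#B) \<longleftrightarrow> l \<le> a \<and> a \<le> u \<and> z \<in> boxset B"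
      unfolding Cons boxset_def by (auto simp: nth_Cons split: nat.splits)
    then show ?thesis using Cons by auto
  qed
qed

lemma wfb_Cons[simp]: "wfb (q#B) \<longleftrightarrow> (snd q = fst q \<or> snd q = Suc (fst q)) \<and> wfb B"
  by (simp add: wfb_def)

lemma wfb_Nil[simp]: "wfb []" by (simp add: wfb_def)

lemma dimb_Cons[simp]: "dimb (q#B) = (if fst q \<noteq> snd q then Suc (dimb B) else dimb B)"
  by (simp add: dimb_def)

lemma dimb_Nil[simp]: "dimb [] = 0" by (simp add: dimb_def)

lemma grid_box:
  assumes inj: "inj_on pp {..<d}"
    and H: "\<forall>i<d. pp i < length b \<and> (b!(pp i) = Suc (g i) \<or> g i = Suc (b!(pp i)))"
  shows "\<exists>B. wfb B \<and> length B = length b \<and> dimb B = d \<and> Mx b pp g ` Pow {..<d} = boxset B"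
proof -
  define gp where "gp p = g (THE i. i < d \<and> pp i = p)" for p
  have gp: "gp (pp i) = g i" if "i < d" for i
  proof -
    have "(THE j. j < d \<and> pp j = pp i) = i"
      using that inj by (intro the_equality) (auto dest: inj_onD)
    then show ?thesis by (simp add: gp_def)
  qed
  define B where "B = map (\<lambda>p. if p \<in> pp ` {..<d} then (min (b!p) (gp p), max (b!p) (gp p)) else (b!p, b!p)) [0..<length b]"
  have lB: "length B = length b" by (simp add: B_def)
  have Bin: "B ! (pp i) = (min (b!(pp i)) (g i), max (b!(pp i)) (g i))" if "i < d" for i
    using that H gp by (auto simp: B_def)
  have Bout: "B ! p = (b!p, b!p)" if "p < length b" "p \<notin> pp ` {..<d}" for p
    using that by (simp add: B_def)
  have wf: "wfb B"
    unfolding wfb_def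
  proof
    fix q assume "q \<in> set B"
    then obtain p where p: "p < length B" "q = B!p" by (auto simp: in_set_conv_nth)
    show "snd q = fst q \<or> snd q = Suc (fst q)"
    proof (cases "p \<in> pp ` {..<d}")
      case True
      then obtain i where "i < d" "p = pp i" by auto
      then show ?thesis using Bin[of i] H p by auto
    next
      case False then show ?thesis using Bout p lB by auto
    qed
  qed
  have "{p. p < length B \<and> fst (B!p) \<noteq> snd (B!p)} = pp ` {..<d}"
  proof (rule set_eqI)
    fix p
    show "p \<in> {p. p < length B \<and> fst (B!p) \<noteq> snd (B!p)} \<longleftrightarrow> p \<in> pp ` {..<d}"
    proof (cases "p \<in> pp ` {..<d}")
      case True
      then obtain i where "i < d" "p = pp i" by auto
      then show ?thesis using Bin[of i] H lB by auto
    next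
      case False then show ?thesis using Bout lB by auto
    qed
  qed
  then have dim: "dimb B = d"
    unfolding dimb_def length_filter_conv_card using card_image[OF inj] by simp
  have "Mx b pp g ` Pow {..<d} = boxset B"
  proof
    show "Mx b pp g ` Pow {..<d} \<subseteq> boxset B"
    proof
      fix z assume "z \<in> Mx b pp g ` Pow {..<d}"
      then obtain T where T: "T \<subseteq> {..<d}" "z = Mx b pp g T" by auto
      have injT: "inj_on pp T" using inj T(1) inj_on_subset by blast
      show "z \<in> boxset B"
        unfolding boxset_def
      proof (rule CollectI, rule conjI)
        show "length z = length B" using T lB by simp
        show "\<forall>p<length B. fst (B!p) \<le> z!p \<and> z!p \<le> snd (B!p)"
        proof (intro allI impI)
        fix p assume p: "p < length B"
        show "fst (B!p) \<le> z!p \<and> z!p \<le> snd (B!p)"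
        proof (cases "p \<in> pp ` {..<d}")
          case True
          then obtain i where i: "i < d" "p = pp i" by auto
          show ?thesis
          proof (cases "i \<in> T")
            case True
            then show ?thesis using Mx_in[OF injT True, of b g] H i Bin[of i] T by auto
          next
            case False
            have "p \<notin> pp ` T" using False i inj T(1) by (auto dest: inj_onD)
            then show ?thesis using Mx_out[of p b pp T g] H i Bin[of i] T lB p by auto
          qed
        next
          case False
          then have "p \<notin> pp ` T" using T by auto
          then show ?thesis using Mx_out[of p b pp T g] Bout[of p] False T lB p by auto
        qed
        qed
      qed
    qed
    show "boxset B \<subseteq> Mx b pp g ` Pow {..<d}"
    proof
      fix z assume z: "z \<in> boxset B"
      define T where "T = {i. i < d \<and> z!(pp i) \<noteq> b!(pp i)}"
      have T: "T \<subseteq> {..<d}" by (auto simp: T_def)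
      have injT: "inj_on pp T" using inj T inj_on_subset by blast
      have lz: "length z = length b" using z lB by (simp add: boxset_def)
      have zr: "fst (B!p) \<le> z!p \<and> z!p \<le> snd (B!p)" if "p < length b" for p
        using z that lB by (simp add: boxset_def)
      have "Mx b pp g T = z"
      proof (rule nth_equalityI)
        show "length (Mx b pp g T) = length z" using lz by simp
        fix p assume p: "p < length (Mx b pp g T)"
        then have p': "p < length b" by simp
        show "Mx b pp g T ! p = z ! p"
        proof (cases "p \<in> pp ` {..<d}")
          case True
          then obtain i where i: "i < d" "p = pp i" by auto
          have zz: "z!p = b!p \<or> z!p = g i" using zr[OF p'] Bin[OF i(1)] H i by auto
          show ?thesis
          proof (cases "i \<in> T")
            case True
            then have "z!p \<noteq> b!p" using i by (simp add: T_def)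
            then show ?thesis using Mx_in[OF injT True, of b g] H i zz by auto
          next
            case False
            then have zb: "z!p = b!p" using i by (simp add: T_def)
            have "p \<notin> pp ` T" using False i inj T by (auto dest: inj_onD)
            then show ?thesis using Mx_out[of p b pp T g] p' zb by auto
          qed
        next
          case False
          then have "p \<notin> pp ` T" using T by auto
          then show ?thesis using Mx_out[of p b pp T g] Bout[OF p' False] zr[OF p'] p' by auto
        qed
      qed
      then show "z \<in> Mx b pp g ` Pow {..<d}" using T by blast
    qed
  qed
  then show ?thesis using wf lB dim by blast
qed

lemma cube_is_box:
  fixes f :: "bool list \<Rightarrow> nat list"
  assumes bij: "bij_betw f (cube_vertices d) S"
    and adj: "\<And>x y. x \<in> cube_vertices d \<Longrightarrow> y \<in> cube_vertices d \<Longrightarrow> cube_adj x y \<longleftrightarrow> gadj (f x) (f y)"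
    and len: "\<forall>z\<in>S. length z = n"
  shows "\<exists>B. wfb B \<and> length B = n \<and> dimb B = d \<and> S = boxset B"
proof -
  obtain b pp g where inj: "inj_on pp {..<d}"
    and H: "\<forall>i<d. pp i < length b \<and> (b!(pp i) = Suc (g i) \<or> g i = Suc (b!(pp i)))"
    and S: "S = Mx b pp g ` Pow {..<d}"
    using grid_prod[OF bij adj] by blast
  have "b \<in> S" using S Mx_empty by (metis Pow_bottom image_eqI)
  then have "length b = n" using len by auto
  then show ?thesis using grid_box[OF inj H] S by metis
qed

lemma cube_adj_Cons:
  "cube_adj (a#x) (c#y) \<longleftrightarrow> (a = c \<and> cube_adj x y) \<or> (a \<noteq> c \<and> x = y)"
proof -
  define D where "D = {j. j < length x \<and> x!j \<noteq> y!j}"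
  have e: "{j. j < length (a#x) \<and> (a#x)!j \<noteq> (c#y)!j} = (if a \<noteq> c then {0} else {}) \<union> Suc ` D"
  proof (rule set_eqI)
    fix j show "j \<in> {j. j < length (a#x) \<and> (a#x)!j \<noteq> (c#y)!j} \<longleftrightarrow> j \<in> (if a \<noteq> c then {0} else {}) \<union> Suc ` D"
      by (cases j) (auto simp: D_def)
  qed
  have fin: "finite D" by (simp add: D_def)
  have c: "card {j. j < length (a#x) \<and> (a#x)!j \<noteq> (c#y)!j} = (if a \<noteq> c then 1 else 0) + card D"
    unfolding e using fin by (simp add: card_image)
  have xy: "x = y \<longleftrightarrow> card D = 0" if "length x = length y"
    using that fin by (auto simp: D_def list_eq_iff_nth_eq)
  show ?thesis
  proof (cases "length x = length y")
    case True
    then show ?thesis unfolding cube_adj_def using c xy[OF True] D_def by auto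
  next
    case False
    then show ?thesis unfolding cube_adj_def by auto
  qed
qed

lemma cube_adj_Nil[simp]: "\<not> cube_adj [] []"
  by (simp add: cube_adj_def)

lemma cv_Suc: "v \<in> cube_vertices (Suc d) \<longleftrightarrow> (\<exists>a x. v = a#x \<and> x \<in> cube_vertices d)"
  by (cases v) (auto simp: cv_iff)

lemma cv_0: "cube_vertices 0 = {[]}"
  by (auto simp: cv_iff)

lemma box_cube:
  "wfb B \<Longrightarrow> \<exists>h. bij_betw h (cube_vertices (dimb B)) (boxset B) \<and>
     (\<forall>x\<in>cube_vertices (dimb B). \<forall>y\<in>cube_vertices (dimb B). cube_adj x y \<longleftrightarrow> gadj (h x) (h y))"
proof (induction B)
  case Nil
  show ?case
    by (intro exI[of _ "\<lambda>_. []"]) (auto simp: cv_0 bij_betw_def)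
next
  case (Cons q B)
  obtain l u where q: "q = (l,u)" by (cases q)
  have wB: "wfb B" and lu: "u = l \<or> u = Suc l" using Cons.prems q by auto
  obtain h' where bh: "bij_betw h' (cube_vertices (dimb B)) (boxset B)"
    and ah: "\<forall>x\<in>cube_vertices (dimb B). \<forall>y\<in>cube_vertices (dimb B). cube_adj x y \<longleftrightarrow> gadj (h' x) (h' y)"
    using Cons.IH[OF wB] by blast
  have injh': "inj_on h' (cube_vertices (dimb B))" and imh': "h' ` cube_vertices (dimb B) = boxset B"
    using bh by (auto simp: bij_betw_def)
  show ?case
  proof (cases "u = l")
    case True
    have dq: "dimb (q#B) = dimb B" using q True by simp
    have bs: "boxset (q#B) = Cons l ` boxset B" using q True by (auto simp: boxset_Cons)
    show ?thesis unfolding dq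
    proof (intro exI[of _ "\<lambda>x. l # h' x"] conjI)
      show "bij_betw (\<lambda>x. l # h' x) (cube_vertices (dimb B)) (boxset (q # B))"
        unfolding bij_betw_def bs using injh' imh' by (auto simp: inj_on_def)
      show "\<forall>x\<in>cube_vertices (dimb B). \<forall>y\<in>cube_vertices (dimb B). cube_adj x y \<longleftrightarrow> gadj (l # h' x) (l # h' y)"
        using ah by simp
    qed
  next
    case False
    then have u: "u = Suc l" using lu by simp
    have dq: "dimb (q#B) = Suc (dimb B)" using q u by simp
    define h where "h v = (if hd v then Suc l else l) # h' (tl v)" for v
    have inj: "inj_on h (cube_vertices (Suc (dimb B)))"
    proof (rule inj_onI)
      fix v w assume v: "v \<in> cube_vertices (Suc (dimb B))" and w: "w \<in> cube_vertices (Suc (dimb B))" and e: "h v = h w"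
      obtain a x where vx: "v = a#x" "x \<in> cube_vertices (dimb B)" using v cv_Suc by blast
      obtain c y where wy: "w = c#y" "y \<in> cube_vertices (dimb B)" using w cv_Suc by blast
      have "a = c" using e vx wy by (auto simp: h_def split: if_splits)
      moreover have "x = y" using e vx wy injh' by (auto simp: h_def inj_on_def)
      ultimately show "v = w" using vx wy by simp
    qed
    have im: "h ` cube_vertices (Suc (dimb B)) = boxset (q#B)"
    proof
      have hx: "\<And>x. x \<in> cube_vertices (dimb B) \<Longrightarrow> h' x \<in> boxset B" using imh' by blast
      show "h ` cube_vertices (Suc (dimb B)) \<subseteq> boxset (q#B)"
        using hx q u by (auto simp: h_def boxset_Cons cv_Suc)
      show "boxset (q#B) \<subseteq> h ` cube_vertices (Suc (dimb B))"
      proof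
        fix v assume "v \<in> boxset (q#B)"
        then obtain a z where v: "v = a#z" "l \<le> a" "a \<le> Suc l" "z \<in> boxset B" using q u by (auto simp: boxset_Cons)
        obtain x where x: "x \<in> cube_vertices (dimb B)" "z = h' x" using v(4) imh' by auto
        have "h ((a = Suc l) # x) = v" using v x by (auto simp: h_def)
        moreover have "(a = Suc l) # x \<in> cube_vertices (Suc (dimb B))" using x cv_Suc by blast
        ultimately show "v \<in> h ` cube_vertices (Suc (dimb B))" by blast
      qed
    qed
    show ?thesis unfolding dq
    proof (intro exI[of _ h] conjI)
      show "bij_betw h (cube_vertices (Suc (dimb B))) (boxset (q # B))"
        using inj im by (simp add: bij_betw_def)
      show "\<forall>x\<in>cube_vertices (Suc (dimb B)). \<forall>y\<in>cube_vertices (Suc (dimb B)). cube_adj x y \<longleftrightarrow> gadj (h x) (h y)"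
      proof (intro ballI)
        fix v w assume v: "v \<in> cube_vertices (Suc (dimb B))" and w: "w \<in> cube_vertices (Suc (dimb B))"
        obtain a x where vx: "v = a#x" "x \<in> cube_vertices (dimb B)" using v cv_Suc by blast
        obtain c y where wy: "w = c#y" "y \<in> cube_vertices (dimb B)" using w cv_Suc by blast
        have ie: "h' x = h' y \<longleftrightarrow> x = y" using injh' vx wy by (auto simp: inj_on_def)
        have ae: "cube_adj x y \<longleftrightarrow> gadj (h' x) (h' y)" using ah vx wy by blast
        show "cube_adj v w \<longleftrightarrow> gadj (h v) (h w)"
          unfolding vx wy h_def cube_adj_Cons using ie ae by auto
      qed
    qed
  qed
qed

lemma boxset_fst: "wfb B \<Longrightarrow> map fst B \<in> boxset B"
  by (auto simp: boxset_def wfb_def) (metis nth_mem le_SucI order_refl)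

lemma boxset_len: "z \<in> boxset B \<Longrightarrow> length z = length B"
  by (simp add: boxset_def)

lemma boxset_inj: "wfb B \<Longrightarrow> wfb B' \<Longrightarrow> boxset B = boxset B' \<Longrightarrow> B = B'"
proof (induction B arbitrary: B')
  case Nil
  then have "map fst B' \<in> boxset []" using boxset_fst by auto
  then show ?case by simp
next
  case (Cons q B)
  obtain l u where q: "q = (l,u)" by (cases q)
  have "map fst (q#B) \<in> boxset B'" using boxset_fst Cons.prems by blast
  then have "length (map fst (q#B)) = length B'" by (rule boxset_len)
  then have "length B' = Suc (length B)" by simp
  then obtain q' B'' where B': "B' = q' # B''" by (cases B') auto
  obtain l' u' where q': "q' = (l',u')" by (cases q')
  have w: "l \<le> u" "l' \<le> u'" "wfb B" "wfb B''" using Cons.prems q q' B' by auto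
  have f1: "map fst B \<in> boxset B" "map fst B'' \<in> boxset B''" using w boxset_fst by auto
  have E: "a#z \<in> boxset ((l,u)#B) \<longleftrightarrow> a#z \<in> boxset ((l',u')#B'')" for a z
    using Cons.prems(3) q q' B' by simp
  have "l' \<le> l \<and> l \<le> u'" using E[of l "map fst B"] f1 w by (auto simp: boxset_Cons)
  moreover have "l' \<le> u \<and> u \<le> u'" using E[of u "map fst B"] f1 w by (auto simp: boxset_Cons)
  moreover have "l \<le> l' \<and> l' \<le> u" using E[of l' "map fst B''"] f1 w by (auto simp: boxset_Cons)
  moreover have "l \<le> u' \<and> u' \<le> u" using E[of u' "map fst B''"] f1 w by (auto simp: boxset_Cons)
  ultimately have ll: "l = l'" "u = u'" by auto
  have "boxset B = boxset B''"
  proof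
    show "boxset B \<subseteq> boxset B''" using E[of l] w ll by (auto simp: boxset_Cons)
    show "boxset B'' \<subseteq> boxset B" using E[of l] w ll by (auto simp: boxset_Cons)
  qed
  then have "B = B''" using Cons.IH w by blast
  then show ?case using q q' B' ll by simp
qed

fun okbox :: "nat \<Rightarrow> (nat \<times> nat) list \<Rightarrow> bool" where
  "okbox k [] = True"
| "okbox k [(l,u)] = (u < k)"
| "okbox k ((l,u)#(l2,u2)#B) = ((u < k \<and> okbox k ((l2,u2)#B)) \<or>
      (k - 1 \<le> l \<and> u = k \<and> l2 = k-1 \<and> u2 = k-1 \<and> okbox k B))"

lemma psl_lt: assumes "a < k" shows "psl k (a#z) \<longleftrightarrow> psl k z"
proof
  assume "psl k (a#z)" then show "psl k z" using assms by (cases rule: psl.cases) auto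
next
  assume "psl k z" then show "psl k (a#z)" using assms by (auto intro: psl_d)
qed

lemma psl_k: assumes "k \<ge> 1" shows "psl k (k#z) \<longleftrightarrow> (\<exists>z'. z = (k-1)#z' \<and> psl k z')"
proof
  assume "psl k (k#z)" then show "\<exists>z'. z = (k-1)#z' \<and> psl k z'" using assms by (cases rule: psl.cases) auto
next
  assume "\<exists>z'. z = (k-1)#z' \<and> psl k z'"
  then obtain z' where "z = (k-1)#z'" "psl k z'" by blast
  then show "psl k (k#z)" using psl_kk[of k z'] by simp
qed

lemma psl_gt: "k < a \<Longrightarrow> \<not> psl k (a#z)"
  by (auto elim: psl.cases)

lemma psl_single: "psl k [a] \<longleftrightarrow> a < k"
  by (auto elim: psl.cases intro: psl.intros)

lemma box_psl:
  "k \<ge> 2 \<Longrightarrow> wfb B \<Longrightarrow> (boxset B \<subseteq> {z. psl k z} \<longleftrightarrow> okbox k B)"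
proof (induction k B rule: okbox.induct)
  case (1 k) then show ?case by (auto intro: psl.intros)
next
  case (2 k l u)
  have "boxset [(l,u)] = {[a] | a. l \<le> a \<and> a \<le> u}" by (auto simp: boxset_Cons)
  moreover have "l \<le> u" using 2 by auto
  ultimately show ?case by (auto simp: psl_single)
next
  case (3 kk l u l2 u2 B)
  have k2: "kk \<ge> 2" using "3.prems" by simp
  have wf: "l \<le> u" "u = l \<or> u = Suc l" "l2 \<le> u2" "u2 = l2 \<or> u2 = Suc l2" "wfb B" "wfb ((l2,u2)#B)"
    using "3.prems" by auto
  have bs: "boxset ((l,u)#(l2,u2)#B) = {a#z | a z. l \<le> a \<and> a \<le> u \<and> z \<in> boxset ((l2,u2)#B)}"
    by (simp add: boxset_Cons)
  have bs2: "boxset ((l2,u2)#B) = {b#z | b z. l2 \<le> b \<and> b \<le> u2 \<and> z \<in> boxset B}"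
    by (simp add: boxset_Cons)
  have f1: "map fst B \<in> boxset B" using boxset_fst wf by auto
  show ?case
  proof
    assume sub: "boxset ((l,u)#(l2,u2)#B) \<subseteq> {z. psl kk z}"
    have el: "psl kk (a#z)" if "l \<le> a" "a \<le> u" "z \<in> boxset ((l2,u2)#B)" for a z
      using sub that bs by blast
    have el2: "psl kk (a#b#z)" if "l \<le> a" "a \<le> u" "l2 \<le> b" "b \<le> u2" "z \<in> boxset B" for a b z
      using el[of a "b#z"] that bs2 by blast
    show "okbox kk ((l,u)#(l2,u2)#B)"
    proof (cases "u < kk")
      case True
      have "boxset ((l2,u2)#B) \<subseteq> {z. psl kk z}"
        using el[of l] wf True psl_lt[of l kk] by auto
      then show ?thesis using "3.IH"(1) wf True k2 by simp
    next
      case False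
      have e1: "psl kk (u # l2 # map fst B)" using el2[OF wf(1) order_refl order_refl wf(3) f1] .
      have e2: "psl kk (u # u2 # map fst B)" using el2[OF wf(1) order_refl wf(3) order_refl f1] .
      have "u \<le> kk" using e1 psl_gt[of kk u] not_le by blast
      then have uk: "u = kk" using False by simp
      have k1: "kk \<ge> 1" using k2 by simp
      have l2: "l2 = kk - 1" using e1 uk psl_k[OF k1] by auto
      have u2: "u2 = kk - 1" using e2 uk psl_k[OF k1] by auto
      have "boxset B \<subseteq> {z. psl kk z}"
      proof
        fix z assume "z \<in> boxset B"
        then have "psl kk (kk # (kk-1) # z)" using el2[OF wf(1) order_refl, of l2 z] uk l2 wf by simp
        then show "z \<in> {z. psl kk z}" using psl_k[OF k1] by auto
      qed
      then have "okbox kk B" using "3.IH"(2) k2 wf by simp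
      moreover have "kk - 1 \<le> l" using wf uk by auto
      ultimately show ?thesis using uk l2 u2 by simp
    qed
  next
    assume ok: "okbox kk ((l,u)#(l2,u2)#B)"
    show "boxset ((l,u)#(l2,u2)#B) \<subseteq> {z. psl kk z}"
    proof (cases "u < kk \<and> okbox kk ((l2,u2)#B)")
      case True
      then have "boxset ((l2,u2)#B) \<subseteq> {z. psl kk z}" using "3.IH"(1) k2 wf by simp
      then show ?thesis unfolding bs using True psl_lt by auto
    next
      case False
      then have c: "kk - 1 \<le> l" "u = kk" "l2 = kk-1" "u2 = kk-1" "okbox kk B" using ok by auto
      then have sB: "boxset B \<subseteq> {z. psl kk z}" using "3.IH"(2) k2 wf by simp
      have k1: "kk \<ge> 1" using k2 by simp
      show ?thesis
      proof
        fix v assume "v \<in> boxset ((l,u)#(l2,u2)#B)"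
        then obtain a z where v: "v = a # (kk-1) # z" "kk - 1 \<le> a" "a \<le> kk" "z \<in> boxset B"
          using c unfolding bs bs2 by auto
        have pz: "psl kk z" using sB v by auto
        have p1: "psl kk ((kk-1)#z)" using pz psl_lt[of "kk-1" kk z] k1 by simp
        show "v \<in> {z. psl kk z}"
        proof (cases "a = kk")
          case True then show ?thesis using v pz psl_k[OF k1] by auto
        next
          case False then have "a < kk" using v by simp
          then show ?thesis using v p1 psl_lt by auto
        qed
      qed
    qed
  qed
qed

lemma padj:
  assumes "k \<ge> 2" "u \<in> pell_vertices n k" "v \<in> pell_vertices n k"
  shows "pell_adj n k u v \<longleftrightarrow> gadj (psi k u) (psi k v)"
  using assms adj_psi[of k u v] unfolding pell_adj_def pell_vertices_def by auto

definition iota :: "nat \<Rightarrow> nat list \<Rightarrow> nat list" where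
  "iota k z = (SOME w. pell_string k w \<and> psi k w = z)"

lemma iota: assumes "psl k z" shows "pell_string k (iota k z) \<and> psi k (iota k z) = z"
  unfolding iota_def by (rule someI_ex[OF psl_psi[OF assms]])

lemma psi_inj_V: "k \<ge> 2 \<Longrightarrow> inj_on (psi k) (pell_vertices n k)"
  using psi_inj[of k] by (auto simp: inj_on_def pell_vertices_def)

definition Phi :: "nat \<Rightarrow> nat \<Rightarrow> (nat \<times> nat) list \<Rightarrow> nat list set" where
  "Phi n k B = {w \<in> pell_vertices n k. psi k w \<in> boxset B}"

lemma psiPhi:
  assumes k: "k \<ge> 2" and B: "wfb B" "length B = n" "okbox k B"
  shows "psi k ` Phi n k B = boxset B"
proof
  show "psi k ` Phi n k B \<subseteq> boxset B" by (auto simp: Phi_def)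
  show "boxset B \<subseteq> psi k ` Phi n k B"
  proof
    fix z assume z: "z \<in> boxset B"
    then have p: "psl k z" using box_psl[OF k B(1)] B(3) by auto
    have lz: "length z = n" using z B boxset_len by auto
    have i: "pell_string k (iota k z)" "psi k (iota k z) = z" using iota[OF p] by auto
    have "length (iota k z) = n" using psi_len[OF i(1)] i(2) lz by simp
    then have "iota k z \<in> Phi n k B" using i z by (simp add: Phi_def pell_vertices_def)
    then show "z \<in> psi k ` Phi n k B" using i by (metis image_eqI)
  qed
qed

lemma count_cubes:
  assumes k: "k \<ge> 2"
  shows "num_induced_cubes (pell_vertices n k) (pell_adj n k) d =
         card {B. wfb B \<and> length B = n \<and> okbox k B \<and> dimb B = d}"
proof -
  let ?V = "pell_vertices n k"
  let ?C = "{S. S \<subseteq> ?V \<and> (\<exists>f. bij_betw f (cube_vertices d) S \<and>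
        (\<forall>u\<in>cube_vertices d. \<forall>v\<in>cube_vertices d. cube_adj u v \<longleftrightarrow> pell_adj n k (f u) (f v)))}"
  let ?B = "{B. wfb B \<and> length B = n \<and> okbox k B \<and> dimb B = d}"
  have injV: "inj_on (psi k) ?V" using psi_inj_V[OF k] .
  have inj: "inj_on (Phi n k) ?B"
  proof (rule inj_onI)
    fix B B' assume "B \<in> ?B" "B' \<in> ?B" "Phi n k B = Phi n k B'"
    moreover have "boxset B = psi k ` Phi n k B" using psiPhi[OF k] `B \<in> ?B` by auto
    moreover have "boxset B' = psi k ` Phi n k B'" using psiPhi[OF k] `B' \<in> ?B` by auto
    ultimately have "boxset B = boxset B'" by simp
    then show "B = B'" using boxset_inj `B \<in> ?B` `B' \<in> ?B` by auto
  qed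
  have into: "Phi n k B \<in> ?C" if B: "B \<in> ?B" for B
  proof -
    have wB: "wfb B" "length B = n" "okbox k B" "dimb B = d" using B by auto
    obtain h where bh: "bij_betw h (cube_vertices (dimb B)) (boxset B)"
      and ah: "\<forall>x\<in>cube_vertices (dimb B). \<forall>y\<in>cube_vertices (dimb B). cube_adj x y \<longleftrightarrow> gadj (h x) (h y)"
      using box_cube[OF wB(1)] by blast
    have hin: "h x \<in> boxset B" if "x \<in> cube_vertices d" for x using bh that wB by (auto simp: bij_betw_def)
    have hpsl: "psl k (h x)" if "x \<in> cube_vertices d" for x using hin[OF that] box_psl[OF k wB(1)] wB by auto
    define f where "f x = iota k (h x)" for x
    have fp: "pell_string k (f x)" "psi k (f x) = h x" if "x \<in> cube_vertices d" for x
      using iota[OF hpsl[OF that]] by (auto simp: f_def)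
    have fV: "f x \<in> ?V" if "x \<in> cube_vertices d" for x
    proof -
      have "length (h x) = n" using hin[OF that] boxset_len wB by auto
      then show ?thesis using fp[OF that] psi_len[OF fp(1)[OF that]] by (simp add: pell_vertices_def)
    qed
    have fPhi: "f x \<in> Phi n k B" if "x \<in> cube_vertices d" for x
      using fV[OF that] fp[OF that] hin[OF that] by (simp add: Phi_def)
    have injh: "inj_on h (cube_vertices d)" using bh wB by (simp add: bij_betw_def)
    have injf: "inj_on f (cube_vertices d)"
    proof (rule inj_onI)
      fix x y assume "x \<in> cube_vertices d" "y \<in> cube_vertices d" "f x = f y"
      then have "h x = h y" using fp by metis
      then show "x = y" using injh `x \<in> cube_vertices d` `y \<in> cube_vertices d` by (meson inj_onD)
    qed
    have imf: "f ` cube_vertices d = Phi n k B"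
    proof
      show "f ` cube_vertices d \<subseteq> Phi n k B" using fPhi by auto
      show "Phi n k B \<subseteq> f ` cube_vertices d"
      proof
        fix w assume w: "w \<in> Phi n k B"
        then have "psi k w \<in> h ` cube_vertices d" using bh wB by (auto simp: Phi_def bij_betw_def)
        then obtain x where x: "x \<in> cube_vertices d" "psi k w = h x" by auto
        have "f x = w" using injV fV[OF x(1)] w fp[OF x(1)] x(2) by (auto simp: Phi_def inj_on_def)
        then show "w \<in> f ` cube_vertices d" using x by auto
      qed
    qed
    have "\<forall>u\<in>cube_vertices d. \<forall>v\<in>cube_vertices d. cube_adj u v \<longleftrightarrow> pell_adj n k (f u) (f v)"
      using ah wB padj[OF k] fV fp by auto
    moreover have "Phi n k B \<subseteq> ?V" by (auto simp: Phi_def)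
    ultimately show ?thesis using injf imf by (auto simp: bij_betw_def)
  qed
  have onto: "S \<in> Phi n k ` ?B" if S: "S \<in> ?C" for S
  proof -
    obtain f where SV: "S \<subseteq> ?V" and bf: "bij_betw f (cube_vertices d) S"
      and af: "\<forall>u\<in>cube_vertices d. \<forall>v\<in>cube_vertices d. cube_adj u v \<longleftrightarrow> pell_adj n k (f u) (f v)"
      using S by blast
    have injS: "inj_on (psi k) S" using injV SV inj_on_subset by blast
    have bg: "bij_betw (psi k \<circ> f) (cube_vertices d) (psi k ` S)"
      using bij_betw_trans[OF bf inj_on_imp_bij_betw[OF injS]] .
    have fS: "f x \<in> S" if "x \<in> cube_vertices d" for x using bf that by (auto simp: bij_betw_def)
    have ag: "cube_adj x y \<longleftrightarrow> gadj ((psi k \<circ> f) x) ((psi k \<circ> f) y)"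
      if "x \<in> cube_vertices d" "y \<in> cube_vertices d" for x y
    proof -
      have "f x \<in> ?V" "f y \<in> ?V" using fS that SV by auto
      then show ?thesis using af that padj[OF k, of "f x" n "f y"] by simp
    qed
    have len: "\<forall>z\<in>psi k ` S. length z = n"
      using SV psi_len by (auto simp: pell_vertices_def)
    obtain B where B: "wfb B" "length B = n" "dimb B = d" "psi k ` S = boxset B"
      using cube_is_box[OF bg ag len] by blast
    have "boxset B \<subseteq> {z. psl k z}"
    proof
      fix z assume "z \<in> boxset B"
      then obtain w where "w \<in> S" "z = psi k w" using B(4) by blast
      then show "z \<in> {z. psl k z}" using SV psi_psl by (auto simp: pell_vertices_def)
    qed
    then have okB: "okbox k B" using box_psl[OF k B(1)] by simp
    have "Phi n k B = S"
    proof
      show "S \<subseteq> Phi n k B" using SV B(4) by (auto simp: Phi_def)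
      show "Phi n k B \<subseteq> S"
      proof
        fix w assume w: "w \<in> Phi n k B"
        then obtain w' where "w' \<in> S" "psi k w = psi k w'" using B(4) by (auto simp: Phi_def)
        then have "w = w'" using injV w SV by (auto simp: Phi_def inj_on_def)
        then show "w \<in> S" using `w' \<in> S` by simp
      qed
    qed
    moreover have "B \<in> ?B" using B okB by simp
    ultimately show ?thesis by (intro image_eqI[of S "Phi n k" B]) auto
  qed
  have "Phi n k ` ?B = ?C"
  proof
    show "Phi n k ` ?B \<subseteq> ?C" using into by (rule image_subsetI)
    show "?C \<subseteq> Phi n k ` ?B" using onto by (rule subsetI)
  qed
  then have "bij_betw (Phi n k) ?B ?C"
    unfolding bij_betw_def using inj by simp
  then show ?thesis unfolding num_induced_cubes_def by (simp add: bij_betw_same_card)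
qed

definition tcf :: "'a::comm_ring_1 \<Rightarrow> 'a \<Rightarrow> nat \<Rightarrow> nat \<Rightarrow> 'a" where
  "tcf A B n i = of_nat ((n - i) choose i) * (A ^ (n - 2*i) * B ^ i)"

lemma tcf_zero: "n div 2 < i \<Longrightarrow> tcf A B n i = 0"
  unfolding tcf_def by (subst binomial_eq_0) auto

lemma sum_ext: "(\<Sum>i\<le>n div 2. tcf A B n i) = (\<Sum>i\<le>n. tcf A B n i)"
  by (rule sum.mono_neutral_left) (auto simp: tcf_zero)

lemma sum_ext2: "m \<ge> n \<Longrightarrow> (\<Sum>i\<le>n div 2. tcf A B n i) = (\<Sum>i\<le>m. tcf A B n i)"
  by (rule sum.mono_neutral_left) (auto simp: tcf_zero)

lemma tcf_step:
  "tcf A B (Suc (Suc n)) i = A * tcf A B (Suc n) i + (if i = 0 then 0 else B * tcf A B n (i - 1))"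
proof (cases i)
  case 0 then show ?thesis by (simp add: tcf_def)
next
  case (Suc j)
  show ?thesis
  proof (cases "j \<le> n")
    case False
    then show ?thesis using Suc by (cases j) (simp_all add: tcf_def)
  next
    case True
    have e1: "Suc (Suc n) - i = Suc (n - j)" "Suc n - i = n - j" "n - (i - 1) = n - j"
      using Suc True by auto
    have e2: "Suc (Suc n) - 2 * i = n - 2*j" "n - 2 * (i - 1) = n - 2*j" using Suc by auto
    have pas: "(Suc (n - j) choose (Suc j)) = ((n - j) choose j) + ((n - j) choose (Suc j))" by simp
    have a: "of_nat ((n - j) choose (Suc j)) * (A ^ (n - 2*j) * B ^ Suc j)
           = A * (of_nat ((n - j) choose (Suc j)) * (A ^ (Suc n - 2 * Suc j) * B ^ Suc j))"
    proof (cases "Suc (2*j) \<le> n")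
      case True
      then have "n - 2*j = Suc (Suc n - 2 * Suc j)" by simp
      then show ?thesis by (simp add: algebra_simps)
    next
      case False
      then have z: "((n - j) choose (Suc j)) = 0" by (intro binomial_eq_0) simp
      show ?thesis unfolding z by simp
    qed
    show ?thesis unfolding tcf_def e1 e2 using Suc pas a
      by (simp add: algebra_simps)
  qed
qed

definition cf :: "'a::comm_ring_1 \<Rightarrow> 'a \<Rightarrow> nat \<Rightarrow> 'a" where
  "cf A B n = (\<Sum>i\<le>n div 2. tcf A B n i)"

lemma cf_0: "cf A B 0 = 1" by (simp add: cf_def tcf_def)
lemma cf_1: "cf A B (Suc 0) = A" by (simp add: cf_def tcf_def)

lemma cf_rec: "cf A B (Suc (Suc n)) = A * cf A B (Suc n) + B * cf A B n"
proof -
  have "cf A B (Suc (Suc n)) = (\<Sum>i\<le>Suc (Suc n). tcf A B (Suc (Suc n)) i)"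
    unfolding cf_def by (rule sum_ext)
  also have "\<dots> = (\<Sum>i\<le>Suc (Suc n). A * tcf A B (Suc n) i) + (\<Sum>i\<le>Suc (Suc n). (if i = 0 then 0 else B * tcf A B n (i - 1)))"
    by (simp add: tcf_step sum.distrib)
  also have "(\<Sum>i\<le>Suc (Suc n). A * tcf A B (Suc n) i) = A * cf A B (Suc n)"
    unfolding cf_def sum_distrib_left[symmetric] by (subst sum_ext2[of "Suc n" "Suc (Suc n)" A B]) auto
  also have "(\<Sum>i\<le>Suc (Suc n). (if i = 0 then 0 else B * tcf A B n (i - 1))) = (\<Sum>i\<le>Suc n. B * tcf A B n i)"
    by (subst sum.atMost_Suc_shift) simp
  also have "\<dots> = B * cf A B n"
    unfolding cf_def sum_distrib_left[symmetric] by (subst sum_ext2[of n "Suc n" A B]) auto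
  finally show ?thesis .
qed

lemma deg_rec:
  fixes P :: "nat \<Rightarrow> int poly" and A B :: "int poly"
  assumes P0: "P 0 = 1" and P1: "P (Suc 0) = A" and PS: "\<And>n. P (Suc (Suc n)) = A * P (Suc n) + B * P n"
    and dA: "degree A = 1" and dB: "degree B = 1"
  shows "degree (P n) = n \<and> P n \<noteq> 0"
proof (induction n rule: less_induct)
  case (less n)
  show ?case
  proof (cases n)
    case 0 then show ?thesis using P0 by simp
  next
    case (Suc m)
    show ?thesis
    proof (cases m)
      case 0 then show ?thesis using Suc P1 dA by auto
    next
      case (Suc j)
      have h1: "degree (P (Suc j)) = Suc j" "P (Suc j) \<noteq> 0" using less Suc `n = Suc m` by auto
      have h0: "degree (P j) = j" "P j \<noteq> 0" using less Suc `n = Suc m` by auto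
      have A0: "A \<noteq> 0" "B \<noteq> 0" using dA dB by auto
      have d1: "degree (A * P (Suc j)) = Suc (Suc j)" using degree_mult_eq[OF A0(1) h1(2)] dA h1 by simp
      have d2: "degree (B * P j) = Suc j" using degree_mult_eq[OF A0(2) h0(2)] dB h0 by simp
      have "degree (A * P (Suc j) + B * P j) = Suc (Suc j)"
        using degree_add_eq_left[of "B * P j" "A * P (Suc j)"] d1 d2 by simp
      then show ?thesis using PS[of j] Suc `n = Suc m` by auto
    qed
  qed
qed

definition OKB :: "nat \<Rightarrow> nat \<Rightarrow> (nat \<times> nat) list set" where
  "OKB k n = {B. wfb B \<and> length B = n \<and> okbox k B}"

definition G :: "nat \<Rightarrow> nat \<Rightarrow> int poly" where
  "G k n = (\<Sum>B\<in>OKB k n. [:0,1:] ^ dimb B)"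

definition P1 :: "nat \<Rightarrow> (nat \<times> nat) set" where
  "P1 k = (\<lambda>a. (a,a)) ` {..<k} \<union> (\<lambda>a. (a, Suc a)) ` {..<k-1}"

definition KK :: "nat \<Rightarrow> (nat \<times> nat) set" where
  "KK k = {(k,k), (k-1,k)}"

definition dq :: "nat \<times> nat \<Rightarrow> nat" where
  "dq q = (if fst q \<noteq> snd q then 1 else 0)"

lemma dimb_Cons': "dimb (q#B) = dq q + dimb B"
  by (simp add: dq_def)

lemma okbox_le: "okbox k B \<Longrightarrow> q \<in> set B \<Longrightarrow> snd q \<le> k"
  by (induction k B rule: okbox.induct) auto

lemma OKB_fin: "finite (OKB k n)"
proof -
  have "OKB k n \<subseteq> {xs. set xs \<subseteq> {..k} \<times> {..k} \<and> length xs = n}"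
  proof
    fix B assume B: "B \<in> OKB k n"
    have "snd q \<le> k \<and> fst q \<le> snd q" if "q \<in> set B" for q
      using okbox_le[of k B q] B that by (auto simp: OKB_def wfb_def)
    then show "B \<in> {xs. set xs \<subseteq> {..k} \<times> {..k} \<and> length xs = n}"
      using B by (fastforce simp: OKB_def)
  qed
  moreover have "finite {xs. set xs \<subseteq> {..k} \<times> {..k} \<and> length xs = n}"
    by (rule finite_lists_length_eq) simp
  ultimately show ?thesis by (rule finite_subset)
qed

lemma P1_iff: "q \<in> P1 k \<longleftrightarrow> (snd q = fst q \<or> snd q = Suc (fst q)) \<and> snd q < k"
  by (cases q) (auto simp: P1_def)

lemma KK_iff: "k \<ge> 1 \<Longrightarrow> q \<in> KK k \<longleftrightarrow> (snd q = fst q \<or> snd q = Suc (fst q)) \<and> k - 1 \<le> fst q \<and> snd q = k"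
  by (cases q) (auto simp: KK_def)

lemma OKB_0: "OKB k 0 = {[]}"
  by (auto simp: OKB_def)

lemma OKB_1: "OKB k (Suc 0) = (\<lambda>q. [q]) ` P1 k"
proof
  show "OKB k (Suc 0) \<subseteq> (\<lambda>q. [q]) ` P1 k"
  proof
    fix B assume "B \<in> OKB k (Suc 0)"
    then obtain l u where "B = [(l,u)]" "u < k" "u = l \<or> u = Suc l"
      by (auto simp: OKB_def length_Suc_conv)
    then show "B \<in> (\<lambda>q. [q]) ` P1 k" by (auto simp: P1_iff)
  qed
  show "(\<lambda>q. [q]) ` P1 k \<subseteq> OKB k (Suc 0)"
    by (auto simp: OKB_def P1_iff)
qed

lemma OKB_SS:
  assumes k: "k \<ge> 1"
  shows "OKB k (Suc (Suc n)) = (\<lambda>(q,B). q#B) ` (P1 k \<times> OKB k (Suc n)) \<union>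
      (\<lambda>(q,B). q#(k-1,k-1)#B) ` (KK k \<times> OKB k n)"
proof
  show "OKB k (Suc (Suc n)) \<subseteq> (\<lambda>(q,B). q#B) ` (P1 k \<times> OKB k (Suc n)) \<union>
      (\<lambda>(q,B). q#(k-1,k-1)#B) ` (KK k \<times> OKB k n)"
  proof
    fix B assume B: "B \<in> OKB k (Suc (Suc n))"
    then obtain l u l2 u2 B' where Bs: "B = (l,u)#(l2,u2)#B'" "length B' = n"
      by (auto simp: OKB_def length_Suc_conv)
    have w: "u = l \<or> u = Suc l" "u2 = l2 \<or> u2 = Suc l2" "wfb B'" using B Bs by (auto simp: OKB_def)
    have ok: "okbox k B" using B by (simp add: OKB_def)
    show "B \<in> (\<lambda>(q,B). q#B) ` (P1 k \<times> OKB k (Suc n)) \<union> (\<lambda>(q,B). q#(k-1,k-1)#B) ` (KK k \<times> OKB k n)"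
    proof (cases "u < k \<and> okbox k ((l2,u2)#B')")
      case True
      then have "((l,u), (l2,u2)#B') \<in> P1 k \<times> OKB k (Suc n)"
        using w Bs by (auto simp: P1_iff OKB_def)
      then show ?thesis using Bs by force
    next
      case False
      then have c: "k - 1 \<le> l" "u = k" "l2 = k-1" "u2 = k-1" "okbox k B'" using ok Bs by auto
      then have "((l,u), B') \<in> KK k \<times> OKB k n"
        using w Bs k by (auto simp: KK_iff OKB_def)
      then show ?thesis using Bs c by force
    qed
  qed
  show "(\<lambda>(q,B). q#B) ` (P1 k \<times> OKB k (Suc n)) \<union>
      (\<lambda>(q,B). q#(k-1,k-1)#B) ` (KK k \<times> OKB k n) \<subseteq> OKB k (Suc (Suc n))"
  proof
    fix B assume "B \<in> (\<lambda>(q,B). q#B) ` (P1 k \<times> OKB k (Suc n)) \<union>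
      (\<lambda>(q,B). q#(k-1,k-1)#B) ` (KK k \<times> OKB k n)"
    then consider (a) q T where "B = q#T" "q \<in> P1 k" "T \<in> OKB k (Suc n)"
      | (b) q T where "B = q#(k-1,k-1)#T" "q \<in> KK k" "T \<in> OKB k n" by auto
    then show "B \<in> OKB k (Suc (Suc n))"
    proof cases
      case a
      obtain l u where q: "q = (l,u)" by (cases q)
      obtain q2 T' where T: "T = q2 # T'" using a by (cases T) (auto simp: OKB_def)
      obtain l2 u2 where q2: "q2 = (l2,u2)" by (cases q2)
      show ?thesis using a q T q2 by (auto simp: OKB_def P1_iff)
    next
      case b
      obtain l u where q: "q = (l,u)" by (cases q)
      show ?thesis using b q k by (auto simp: OKB_def KK_iff)
    qed
  qed
qed

abbreviation XX :: "int poly" where "XX \<equiv> [:0,1:]"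

lemma G_0: "G k 0 = 1"
  by (simp add: G_def OKB_0)

lemma G_1: "G k (Suc 0) = (\<Sum>q\<in>P1 k. XX ^ dq q)"
  unfolding G_def OKB_1 by (subst sum.reindex) (auto simp del: dimb_Cons simp: inj_on_def dimb_Cons')

lemma S1:
  assumes k: "k \<ge> 1"
  shows "(\<Sum>q\<in>P1 k. XX ^ dq q) = [:int k, int k - 1:]"
proof -
  have d: "(\<lambda>a. (a,a)) ` {..<k} \<inter> (\<lambda>a. (a, Suc a)) ` {..<k-1} = {}" by auto
  have "(\<Sum>q\<in>P1 k. XX ^ dq q) = (\<Sum>q\<in>(\<lambda>a. (a,a)) ` {..<k}. XX ^ dq q) + (\<Sum>q\<in>(\<lambda>a. (a, Suc a)) ` {..<k-1}. XX ^ dq q)"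
    unfolding P1_def by (rule sum.union_disjoint) (use d in auto)
  also have "(\<Sum>q\<in>(\<lambda>a. (a,a)) ` {..<k}. XX ^ dq q) = of_nat k"
    by (subst sum.reindex) (auto simp: inj_on_def dq_def)
  also have "(\<Sum>q\<in>(\<lambda>a. (a, Suc a)) ` {..<k-1}. XX ^ dq q) = of_nat (k-1) * XX"
    by (subst sum.reindex) (auto simp: inj_on_def dq_def)
  also have "(of_nat k :: int poly) + of_nat (k-1) * XX = [:int k, int k - 1:]"
    using k by (simp add: of_nat_poly of_nat_diff)
  finally show ?thesis .
qed

lemma S2:
  assumes k: "k \<ge> 1"
  shows "(\<Sum>q\<in>KK k. XX ^ dq q) = [:1, 1:]"
proof -
  have "k - 1 \<noteq> k" using k by simp
  then have "(\<Sum>q\<in>KK k. XX ^ dq q) = XX ^ dq (k,k) + XX ^ dq (k-1,k)"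
    by (simp add: KK_def)
  also have "\<dots> = [:1, 1:]" using k by (simp add: dq_def one_pCons)
  finally show ?thesis .
qed

lemma G_SS:
  assumes k: "k \<ge> 1"
  shows "G k (Suc (Suc n)) = [:int k, int k - 1:] * G k (Suc n) + [:1, 1:] * G k n"
proof -
  let ?A = "(\<lambda>(q,B). q#B) ` (P1 k \<times> OKB k (Suc n))"
  let ?B = "(\<lambda>(q,B). q#(k-1,k-1)#B) ` (KK k \<times> OKB k n)"
  have fP1: "finite (P1 k)" by (simp add: P1_def)
  have fKK: "finite (KK k)" by (simp add: KK_def)
  have fA: "finite ?A" using fP1 OKB_fin by auto
  have fB: "finite ?B" using fKK OKB_fin by auto
  have dis: "?A \<inter> ?B = {}" using k by (auto simp: P1_iff KK_iff)
  have r1: "(\<Sum>B\<in>?A. XX ^ dimb B) = (\<Sum>q\<in>P1 k. XX ^ dq q) * G k (Suc n)"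
  proof -
    have "(\<Sum>B\<in>?A. XX ^ dimb B) = (\<Sum>x\<in>P1 k \<times> OKB k (Suc n). XX ^ dimb (case x of (q,B) \<Rightarrow> q#B))"
      by (subst sum.reindex) (auto simp: inj_on_def)
    also have "\<dots> = (\<Sum>(q,B)\<in>P1 k \<times> OKB k (Suc n). XX ^ dq q * XX ^ dimb B)"
      by (rule sum.cong) (auto simp del: dimb_Cons simp: dimb_Cons' power_add)
    also have "\<dots> = (\<Sum>q\<in>P1 k. \<Sum>B\<in>OKB k (Suc n). XX ^ dq q * XX ^ dimb B)"
      by (rule sum.cartesian_product[symmetric])
    also have "\<dots> = (\<Sum>q\<in>P1 k. XX ^ dq q) * G k (Suc n)"
      unfolding G_def by (rule sum_product[symmetric])
    finally show ?thesis .
  qed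
  have r2: "(\<Sum>B\<in>?B. XX ^ dimb B) = (\<Sum>q\<in>KK k. XX ^ dq q) * G k n"
  proof -
    have "(\<Sum>B\<in>?B. XX ^ dimb B) = (\<Sum>x\<in>KK k \<times> OKB k n. XX ^ dimb (case x of (q,B) \<Rightarrow> q#(k-1,k-1)#B))"
      by (subst sum.reindex) (auto simp: inj_on_def)
    also have "\<dots> = (\<Sum>(q,B)\<in>KK k \<times> OKB k n. XX ^ dq q * XX ^ dimb B)"
      by (rule sum.cong) (auto simp del: dimb_Cons simp: dimb_Cons' power_add, simp add: dq_def)
    also have "\<dots> = (\<Sum>q\<in>KK k. \<Sum>B\<in>OKB k n. XX ^ dq q * XX ^ dimb B)"
      by (rule sum.cartesian_product[symmetric])
    also have "\<dots> = (\<Sum>q\<in>KK k. XX ^ dq q) * G k n"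
      unfolding G_def by (rule sum_product[symmetric])
    finally show ?thesis .
  qed
  have "G k (Suc (Suc n)) = (\<Sum>B\<in>?A. XX ^ dimb B) + (\<Sum>B\<in>?B. XX ^ dimb B)"
    unfolding G_def OKB_SS[OF k] by (rule sum.union_disjoint[OF fA fB dis])
  then show ?thesis using r1 r2 S1[OF k] S2[OF k] by simp
qed

lemma G_cf:
  assumes k: "k \<ge> 1"
  shows "G k n = cf [:int k, int k - 1:] [:1, 1:] n \<and> G k (Suc n) = cf [:int k, int k - 1:] [:1, 1:] (Suc n)"
proof (induction n)
  case 0 then show ?case using G_0 G_1 S1[OF k] by (simp add: cf_0 cf_1)
next
  case (Suc n)
  then have h: "G k n = cf [:int k, int k - 1:] [:1, 1:] n" "G k (Suc n) = cf [:int k, int k - 1:] [:1, 1:] (Suc n)"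
    by auto
  show ?case by (simp only: G_SS[OF k] cf_rec h)
qed

lemma pell_lt: "(\<forall>a\<in>set w. a < k) \<Longrightarrow> pell_string k w"
  by (induction w) (auto intro: pell_string.intros)

lemma pell_le: "pell_string k w \<Longrightarrow> set w \<subseteq> {..k}"
  by (induction rule: pell_string.induct) auto

lemma V_fin: "finite (pell_vertices n k)"
proof -
  have "pell_vertices n k \<subseteq> {xs. set xs \<subseteq> {..k} \<and> length xs = n}"
    using pell_le by (auto simp: pell_vertices_def)
  moreover have "finite {xs. set xs \<subseteq> {..k} \<and> length xs = n}"
    by (rule finite_lists_length_eq) simp
  ultimately show ?thesis by (rule finite_subset)
qed

lemma n_le_cardV:
  assumes k: "k \<ge> 2"
  shows "n \<le> card (pell_vertices n k)"
proof -
  define f where "f j = replicate j (1::nat) @ replicate (n - j) 0" for j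
  have "inj_on f {..<n}"
  proof (rule inj_onI)
    fix i j assume "i \<in> {..<n}" "j \<in> {..<n}" "f i = f j"
    then have "sum_list (f i) = sum_list (f j)" by simp
    then show "i = j" by (simp add: f_def sum_list_replicate)
  qed
  moreover have "f ` {..<n} \<subseteq> pell_vertices n k"
    using k by (auto simp: f_def pell_vertices_def intro!: pell_lt)
  ultimately have "card {..<n} \<le> card (pell_vertices n k)"
    using card_inj_on_le V_fin by blast
  then show ?thesis by simp
qed

lemma cube_poly_G:
  assumes k: "k \<ge> 2"
  shows "cube_poly (pell_vertices n k) (pell_adj n k) = G k n"
proof -
  let ?V = "pell_vertices n k"
  let ?M = "card ?V"
  have b: "dimb ` OKB k n \<subseteq> {..?M}"
  proof
    fix i assume "i \<in> dimb ` OKB k n"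
    then obtain B where "B \<in> OKB k n" "i = dimb B" by auto
    then have "i \<le> n" by (auto simp: OKB_def dimb_def)
    then show "i \<in> {..?M}" using n_le_cardV[OF k, of n] by simp
  qed
  have "G k n = (\<Sum>i\<le>?M. \<Sum>B\<in>{B \<in> OKB k n. dimb B = i}. XX ^ dimb B)"
    unfolding G_def by (rule sum.group[symmetric, OF OKB_fin _ b]) simp
  also have "\<dots> = (\<Sum>i\<le>?M. monom (int (num_induced_cubes ?V (pell_adj n k) i)) i)"
  proof (rule sum.cong[OF refl])
    fix i
    have e: "{B \<in> OKB k n. dimb B = i} = {B. wfb B \<and> length B = n \<and> okbox k B \<and> dimb B = i}"
      by (auto simp: OKB_def)
    have "(\<Sum>B\<in>{B \<in> OKB k n. dimb B = i}. XX ^ dimb B) = (\<Sum>B\<in>{B \<in> OKB k n. dimb B = i}. XX ^ i)"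
      by (rule sum.cong) auto
    also have "\<dots> = of_nat (card {B \<in> OKB k n. dimb B = i}) * XX ^ i" by simp
    also have "\<dots> = monom (int (card {B \<in> OKB k n. dimb B = i})) i"
      by (simp add: monom_altdef of_nat_poly)
    finally show "(\<Sum>B\<in>{B \<in> OKB k n. dimb B = i}. XX ^ dimb B) = monom (int (num_induced_cubes ?V (pell_adj n k) i)) i"
      using count_cubes[OF k, of n i] e by simp
  qed
  finally show ?thesis by (simp add: cube_poly_def)
qed

theorem proposition5p3:
  fixes k n :: nat
  assumes "k \<ge> 2"
  shows "degree (cube_poly (pell_vertices n k) (pell_adj n k)) = n \<and>
         cube_poly (pell_vertices n k) (pell_adj n k) =
           (\<Sum>i\<le>n div 2. smult (int ((n - i) choose i))
              ([:int k, int k - 1:] ^ (n - 2 * i) * [:1, 1:] ^ i))"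
proof -
  have k1: "k \<ge> 1" using assms by simp
  have cp: "cube_poly (pell_vertices n k) (pell_adj n k) = G k n" using cube_poly_G[OF assms] .
  have gc: "G k m = cf [:int k, int k - 1:] [:1, 1:] m" for m using G_cf[OF k1] by blast
  have deg: "degree (G k n) = n"
  proof -
    have "degree [:int k, int k - 1:] = 1" using assms by simp
    moreover have "degree [:1::int, 1:] = 1" by simp
    ultimately show ?thesis
      using deg_rec[of "G k" "[:int k, int k - 1:]" "[:1,1:]" n] G_0 G_1 S1[OF k1] G_SS[OF k1] by simp
  qed
  have "cf [:int k, int k - 1:] [:1, 1:] n = (\<Sum>i\<le>n div 2. smult (int ((n - i) choose i))
              ([:int k, int k - 1:] ^ (n - 2 * i) * [:1, 1:] ^ i))"
    unfolding cf_def tcf_def by (rule sum.cong) (auto simp: of_nat_poly)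
  then show ?thesis using cp gc deg by simp
qed

end
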